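(* Let $(\mathcal A,\phi)$ be a noncommutative probability space and $\mathcal F$ its free exchangeability system. For every noncrossing partition $\pi\in NC_n$ and all $X_1,\dots,X_n\in\mathcal A$, $$\phi^{\mathcal F}_\pi(X_1,\dots,X_n)=\prod_{B\in\pi}\phi\Big(\prod_{i\in B}X_i\Big),\qquad K^{\mathcal F}_\pi(X_1,\dots,X_n)=\prod_{B\in\pi}K^{\mathcal F}_{|B|}(X_i:i\in B),$$ where products and sequences within a block are taken in increasing order of the indices.
   Context: A noncommutative probability space is a pair $(\mathcal A,\phi)$ of a complex unital algebra $\mathcal A$ and a unital linear functional $\phi$. The free exchangeability system $\mathcal F$: $\mathcal U$ is the (unital, algebraic) free product of countably many copies $\mathcal A_k$, $k\in\mathbb N$, of $\mathcal A$, $\tilde\phi$ is the free product functional of copies of $\phi$ (characterized by $\tilde\phi(1)=1$, $\tilde\phi$ restricting to $\phi$ on each copy, and $\tilde\phi(a_1\cdots a_m)=0$ whenever $a_j\in\mathcal A_{k_j}$, $k_j\ne k_{j+1}$, $\tilde\phi(a_j)=0$), and $X\mapsto X^{(k)}$ is the inclusion of the $k$-th copy. For $X_1,\dots,X_n\in\mathcal A$ and a partition $\pi$ of $[n]$, $\phi^{\mathcal F}_\pi(X_1,\dots,X_n)=\tilde\phi(X_1^{(i_1)}\cdots X_n^{(i_n)})$ for any indices $i_1,\dots,i_n$ with $i_j=i_l\iff j,l$ in the same block of $\pi$. $K^{\mathcal F}_\pi=\sum_{\sigma\le\pi}\phi^{\mathcal F}_\sigma\,\mu(\sigma,\pi)$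 with $\mu$ the Möbius function of the set-partition lattice $\Pi_n$ under refinement, and $K^{\mathcal F}_m(Y_1,\dots,Y_m)=K^{\mathcal F}_{\hat1_m}(Y_1,\dots,Y_m)$ for the one-block partition. A partition $\pi$ is noncrossing if there are no $i<j<k<l$ with $i,k$ in one block and $j,l$ in a different block; $NC_n$ is the set of noncrossing partitions of $[n]$. *)

theory Defs
  imports Complex_Main "HOL-Library.Disjoint_Sets"
begin

definition complex_unital_algebra :: "(complex \<Rightarrow> 'a::ring_1 \<Rightarrow> 'a) \<Rightarrow> bool" where
  "complex_unital_algebra sm \<longleftrightarrow> module sm \<and>
     (\<forall>c x y. sm c (x * y) = sm c x * y \<and> sm c (x * y) = x * sm c y)"

definition unital_linear_functional ::
    "(complex \<Rightarrow> 'a::ring_1 \<Rightarrow> 'a) \<Rightarrow> ('a \<Rightarrow> complex) \<Rightarrow> bool" where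
  "unital_linear_functional sm f \<longleftrightarrow>
     (\<forall>x y. f (x + y) = f x + f y) \<and> (\<forall>c x. f (sm c x) = c * f x) \<and> f 1 = 1"

definition nc_prob_space :: "(complex \<Rightarrow> 'a::ring_1 \<Rightarrow> 'a) \<Rightarrow> ('a \<Rightarrow> complex) \<Rightarrow> bool" where
  "nc_prob_space sm \<phi> \<longleftrightarrow> complex_unital_algebra sm \<and> unital_linear_functional sm \<phi>"

definition unital_alg_hom ::
    "(complex \<Rightarrow> 'a::ring_1 \<Rightarrow> 'a) \<Rightarrow> (complex \<Rightarrow> 'u::ring_1 \<Rightarrow> 'u) \<Rightarrow> ('a \<Rightarrow> 'u) \<Rightarrow> bool" where
  "unital_alg_hom smA smU h \<longleftrightarrow>
     (\<forall>x y. h (x + y) = h x + h y) \<and> (\<forall>x y. h (x * y) = h x * h y) \<and> h 1 = 1 \<and>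
     (\<forall>c x. h (smA c x) = smU c (h x))"

text \<open>(U, smU, \<iota>, \<psi>) is a free exchangeability system of (A, \<phi>): U is a complex unital
algebra, \<iota> k is the (unital algebra homomorphic) inclusion of the k-th copy of A, \<psi> is a
unital linear functional restricting to \<phi> on every copy, and \<psi> satisfies the
freeness rule characterizing the free product functional: \<psi>(a_1 ... a_m) = 0 whenever
a_j lies in copy k_j, consecutive copies are different and \<phi>(a_j) = 0.\<close>
definition free_exch_system ::
  "(complex \<Rightarrow> 'a::ring_1 \<Rightarrow> 'a) \<Rightarrow> ('a \<Rightarrow> complex) \<Rightarrow>
   (complex \<Rightarrow> 'u::ring_1 \<Rightarrow> 'u) \<Rightarrow> (nat \<Rightarrow> 'a \<Rightarrow> 'u) \<Rightarrow> ('u \<Rightarrow> complex) \<Rightarrow> bool" where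
  "free_exch_system smA \<phi> smU \<iota> \<psi> \<longleftrightarrow>
     complex_unital_algebra smU \<and> unital_linear_functional smU \<psi> \<and>
     (\<forall>k. unital_alg_hom smA smU (\<iota> k)) \<and>
     (\<forall>k a. \<psi> (\<iota> k a) = \<phi> a) \<and>
     (\<forall>ws :: (nat \<times> 'a) list. ws \<noteq> [] \<longrightarrow> successively (\<lambda>p q. fst p \<noteq> fst q) ws \<longrightarrow>
        (\<forall>(k, a) \<in> set ws. \<phi> a = 0) \<longrightarrow>
        \<psi> (prod_list (map (\<lambda>(k, a). \<iota> k a) ws)) = 0)"

definition set_partitions :: "nat \<Rightarrow> nat set set set" where
  "set_partitions n = {\<pi>. partition_on {1..n} \<pi>}"

definition refines :: "nat set set \<Rightarrow> nat set set \<Rightarrow> bool" where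
  "refines \<sigma> \<pi> \<longleftrightarrow> (\<forall>b\<in>\<sigma>. \<exists>c\<in>\<pi>. b \<subseteq> c)"

definition noncrossing :: "nat set set \<Rightarrow> bool" where
  "noncrossing \<pi> \<longleftrightarrow> \<not> (\<exists>B\<in>\<pi>. \<exists>B'\<in>\<pi>. B \<noteq> B' \<and>
      (\<exists>i j k l. i < j \<and> j < k \<and> k < l \<and> i \<in> B \<and> k \<in> B \<and> j \<in> B' \<and> l \<in> B'))"

definition NC :: "nat \<Rightarrow> nat set set set" where
  "NC n = {\<pi> \<in> set_partitions n. noncrossing \<pi>}"

text \<open>The recursion is run with a fuel parameter; fuel n+1 exceeds the length of every
  chain in \<Pi>_n, so mobius n is the genuine Moebius function on \<Pi>_n.\<close>
fun mobius_aux :: "nat \<Rightarrow> nat \<Rightarrow> nat set set \<Rightarrow> nat set set \<Rightarrow> int" where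
  "mobius_aux n 0 \<sigma> \<pi> = 0"
| "mobius_aux n (Suc f) \<sigma> \<pi> =
     (if \<sigma> = \<pi> then 1
      else if refines \<sigma> \<pi> then
        - (\<Sum>\<tau>\<in>{\<tau> \<in> set_partitions n. refines \<sigma> \<tau> \<and> refines \<tau> \<pi> \<and> \<tau> \<noteq> \<pi>}.
              mobius_aux n f \<sigma> \<tau>)
      else 0)"

definition mobius :: "nat \<Rightarrow> nat set set \<Rightarrow> nat set set \<Rightarrow> int" where
  "mobius n \<sigma> \<pi> = mobius_aux n (Suc n) \<sigma> \<pi>"

text \<open>Canonical index choice: i_j = least element of the block of \<pi> containing j
  (so i_j = i_l iff j, l lie in the same block).\<close>
definition block_index :: "nat set set \<Rightarrow> nat \<Rightarrow> nat" where
  "block_index \<pi> j = (LEAST i. \<exists>B\<in>\<pi>. i \<in> B \<and> j \<in> B)"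

definition phiF :: "(nat \<Rightarrow> 'a \<Rightarrow> 'u::ring_1) \<Rightarrow> ('u \<Rightarrow> complex) \<Rightarrow>
    nat \<Rightarrow> nat set set \<Rightarrow> (nat \<Rightarrow> 'a) \<Rightarrow> complex" where
  "phiF \<iota> \<psi> n \<pi> X = \<psi> (prod_list (map (\<lambda>j. \<iota> (block_index \<pi> j) (X j)) [1..<n+1]))"

definition KF :: "(nat \<Rightarrow> 'a \<Rightarrow> 'u::ring_1) \<Rightarrow> ('u \<Rightarrow> complex) \<Rightarrow>
    nat \<Rightarrow> nat set set \<Rightarrow> (nat \<Rightarrow> 'a) \<Rightarrow> complex" where
  "KF \<iota> \<psi> n \<pi> X =
     (\<Sum>\<sigma>\<in>{\<sigma> \<in> set_partitions n. refines \<sigma> \<pi>}. phiF \<iota> \<psi> n \<sigma> X * of_int (mobius n \<sigma> \<pi>))"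

definition KFm :: "(nat \<Rightarrow> 'a \<Rightarrow> 'u::ring_1) \<Rightarrow> ('u \<Rightarrow> complex) \<Rightarrow>
    nat \<Rightarrow> (nat \<Rightarrow> 'a) \<Rightarrow> complex" where
  "KFm \<iota> \<psi> m Y = KF \<iota> \<psi> m {{1..m}} Y"

definition ord_prod :: "(nat \<Rightarrow> 'a::ring_1) \<Rightarrow> nat set \<Rightarrow> 'a" where
  "ord_prod X B = prod_list (map X (sorted_list_of_set B))"

definition restrict_seq :: "(nat \<Rightarrow> 'a) \<Rightarrow> nat set \<Rightarrow> nat \<Rightarrow> 'a" where
  "restrict_seq X B j = X (sorted_list_of_set B ! (j - 1))"

end

theory Submission
  imports Defs
begin


locale fes =
  fixes smA :: "complex \<Rightarrow> 'a::ring_1 \<Rightarrow> 'a"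
    and \<phi> :: "'a \<Rightarrow> complex"
    and smU :: "complex \<Rightarrow> 'u::ring_1 \<Rightarrow> 'u"
    and \<iota> :: "nat \<Rightarrow> 'a \<Rightarrow> 'u"
    and \<psi> :: "'u \<Rightarrow> complex"
  assumes ncps: "nc_prob_space smA \<phi>"
    and fesys: "free_exch_system smA \<phi> smU \<iota> \<psi>"
begin

definition P :: "(nat \<times> 'a) list \<Rightarrow> 'u" where
  "P w = prod_list (map (\<lambda>(k, a). \<iota> k a) w)"

definition Psi :: "(nat \<times> 'a) list \<Rightarrow> complex" where
  "Psi w = \<psi> (P w)"

definition cen :: "'a \<Rightarrow> 'a" where
  "cen a = a - smA (\<phi> a) 1"

definition idx :: "(nat \<times> 'a) list \<Rightarrow> nat set" where
  "idx w = fst ` set w"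

definition alt :: "(nat \<times> 'a) list \<Rightarrow> bool" where
  "alt w \<longleftrightarrow> successively (\<lambda>p q. fst p \<noteq> fst q) w \<and> (\<forall>(k, a) \<in> set w. \<phi> a = 0)"

lemma phi_add: "\<phi> (x + y) = \<phi> x + \<phi> y"
  and phi_sm: "\<phi> (smA c x) = c * \<phi> x" and phi_one: "\<phi> 1 = 1"
  using ncps by (auto simp: nc_prob_space_def unital_linear_functional_def)

lemma psi_add: "\<psi> (x + y) = \<psi> x + \<psi> y"
  and psi_sm: "\<psi> (smU c x) = c * \<psi> x" and psi_one: "\<psi> 1 = 1"
  using fesys by (auto simp: free_exch_system_def unital_linear_functional_def)

lemma smU_mult1: "smU c (x * y) = smU c x * y"
  using fesys by (auto simp: free_exch_system_def complex_unital_algebra_def)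
lemma smU_mult2: "smU c (x * y) = x * smU c y"
  using fesys unfolding free_exch_system_def complex_unital_algebra_def by blast
lemmas smU_mult = smU_mult1 smU_mult2

lemma smU_module: "module smU"
  using fesys by (auto simp: free_exch_system_def complex_unital_algebra_def)

lemma iota_add: "\<iota> k (x + y) = \<iota> k x + \<iota> k y"
  and iota_mult: "\<iota> k (x * y) = \<iota> k x * \<iota> k y"
  and iota_one: "\<iota> k 1 = 1"
  and iota_sm: "\<iota> k (smA c x) = smU c (\<iota> k x)"
  and psi_iota: "\<psi> (\<iota> k a) = \<phi> a"
  using fesys by (auto simp: free_exch_system_def unital_alg_hom_def)

lemma free_rule:
  "ws \<noteq> [] \<Longrightarrow> successively (\<lambda>p q. fst p \<noteq> fst q) ws \<Longrightarrow> (\<forall>(k, a) \<in> set ws. \<phi> a = 0)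
   \<Longrightarrow> \<psi> (prod_list (map (\<lambda>(k, a). \<iota> k a) ws)) = 0"
  using fesys unfolding free_exch_system_def by blast

lemma iota_diff: "\<iota> k (x - y) = \<iota> k x - \<iota> k y"
proof -
  interpret additive "\<iota> k" by standard (rule iota_add)
  show ?thesis by (rule diff)
qed

lemma phi_diff: "\<phi> (x - y) = \<phi> x - \<phi> y"
proof -
  interpret additive "\<phi>" by standard (rule phi_add)
  show ?thesis by (rule diff)
qed

lemma phi_cen: "\<phi> (cen a) = 0"
  by (simp add: cen_def phi_diff phi_sm phi_one)

lemma iota_cen: "\<iota> k a = \<iota> k (cen a) + smU (\<phi> a) 1"
  by (simp add: cen_def iota_diff iota_sm iota_one)

lemma P_Nil[simp]: "P [] = 1" by (simp add: P_def)
lemma P_Cons[simp]: "P ((k, a) # w) = \<iota> k a * P w" by (simp add: P_def)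
lemma P_append[simp]: "P (u @ v) = P u * P v" by (simp add: P_def)

lemma P_merge: "P (u @ (k, a) # (k, b) # u') = P (u @ (k, a * b) # u')"
  by (simp add: iota_mult mult.assoc)

lemma smU_one_mult: "smU c 1 * y = smU c y"
  by (metis mult_1_left smU_mult(1))

lemma Psi_split: "Psi (u @ (k, a) # u') = \<phi> a * Psi (u @ u') + Psi (u @ (k, cen a) # u')"
proof -
  have "P (u @ (k, a) # u') = P u * (\<iota> k (cen a) * P u') + smU (\<phi> a) (P u * P u')"
  proof -
    have "P (u @ (k, a) # u') = P u * ((\<iota> k (cen a) + smU (\<phi> a) 1) * P u')"
      by (simp flip: iota_cen)
    also have "\<dots> = P u * (\<iota> k (cen a) * P u') + P u * (smU (\<phi> a) 1 * P u')"
      by (simp add: distrib_left distrib_right)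
    also have "P u * (smU (\<phi> a) 1 * P u') = smU (\<phi> a) (P u * P u')"
      by (simp add: smU_one_mult smU_mult2)
    finally show ?thesis .
  qed
  then show ?thesis
    by (simp add: Psi_def psi_add psi_sm)
qed

lemma Psi_Nil[simp]: "Psi [] = 1" by (simp add: Psi_def psi_one)

lemma Psi_alt: "w \<noteq> [] \<Longrightarrow> alt w \<Longrightarrow> Psi w = 0"
  unfolding Psi_def P_def alt_def by (rule free_rule) auto

definition ncount :: "(nat \<times> 'a) list \<Rightarrow> nat" where
  "ncount w = length (filter (\<lambda>(k, a). \<phi> a \<noteq> 0) w)"

lemma word_induct[case_names merge split base]:
  assumes merge: "\<And>u k a b u'. Q (u @ (k, a * b) # u') \<Longrightarrow> Q (u @ (k, a) # (k, b) # u')"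
    and split: "\<And>u k a u'. \<phi> a \<noteq> 0 \<Longrightarrow> Q (u @ u') \<Longrightarrow> Q (u @ (k, cen a) # u') \<Longrightarrow> Q (u @ (k, a) # u')"
    and base: "\<And>w. alt w \<Longrightarrow> Q w"
  shows "Q w"
proof (induction "length w ^ 2 + ncount w" arbitrary: w rule: less_induct)
  case less
  have nc_le: "ncount v \<le> length v" for v unfolding ncount_def by simp
  show ?case
  proof (cases "successively (\<lambda>p q. fst p \<noteq> fst q) w")
    case False
    then obtain u k a b u' where w: "w = u @ (k, a) # (k, b) # u'"
    proof (induction w)
      case Nil then show ?case by simp
    next
      case (Cons x w)
      show ?case
      proof (cases w)
        case Nil with Cons show ?thesis by simp
      next
        case (Cons y w')
        show ?thesis
        proof (cases "fst x = fst y")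
          case True
          then show ?thesis using Cons Cons.prems(1)[of "[]" "fst x" "snd x" "snd y" w']
            by (cases x; cases y) auto
        next
          case False
          then have "\<not> successively (\<lambda>p q. fst p \<noteq> fst q) w" using Cons.prems(2) Cons by simp
          then show ?thesis using Cons.IH[of] Cons.prems(1)
            by (metis append_Cons)
        qed
      qed
    qed
    let ?v = "u @ (k, a * b) # u'"
    have "length ?v ^ 2 + ncount ?v < length w ^ 2 + ncount w"
    proof -
      have "ncount ?v \<le> length ?v" by (rule nc_le)
      moreover have "length w = Suc (length ?v)" using w by simp
      ultimately show ?thesis by (simp add: power2_eq_square)
    qed
    then have "Q ?v" by (rule less)
    then show ?thesis using merge w by simp
  next
    case True
    show ?thesis
    proof (cases "\<forall>(k, a) \<in> set w. \<phi> a = 0")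
      case True
      then show ?thesis using \<open>successively _ w\<close> base by (simp add: alt_def)
    next
      case False
      then obtain k a where "(k, a) \<in> set w" "\<phi> a \<noteq> 0" by auto
      then obtain u u' where w: "w = u @ (k, a) # u'" by (metis split_list)
      have 1: "length (u @ u') ^ 2 + ncount (u @ u') < length w ^ 2 + ncount w"
      proof -
        have "ncount (u @ u') \<le> length (u @ u')" by (rule nc_le)
        moreover have "length w = Suc (length (u @ u'))" using w by simp
        ultimately show ?thesis by (simp add: power2_eq_square)
      qed
      have 2: "length (u @ (k, cen a) # u') ^ 2 + ncount (u @ (k, cen a) # u') < length w ^ 2 + ncount w"
        using w \<open>\<phi> a \<noteq> 0\<close> by (simp add: ncount_def phi_cen)
      show ?thesis using split[OF \<open>\<phi> a \<noteq> 0\<close> less[OF 1] less[OF 2]] w by simp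
    qed
  qed
qed

lemma idx_simps[simp]: "idx [] = {}" "idx (x # w) = insert (fst x) (idx w)" "idx (u @ v) = idx u \<union> idx v"
  by (auto simp: idx_def)

lemma alt_append:
  assumes "alt u" "alt v" "idx u \<inter> idx v = {}"
  shows "alt (u @ v)"
proof -
  have "u = [] \<or> v = [] \<or> fst (last u) \<noteq> fst (hd v)"
  proof (cases "u = [] \<or> v = []")
    case False
    then have "fst (last u) \<in> idx u" "fst (hd v) \<in> idx v" by (auto simp: idx_def)
    then show ?thesis using assms(3) by auto
  qed auto
  then show ?thesis using assms by (auto simp: alt_def successively_append_iff)
qed

lemma alt_append2:
  assumes "alt u" "alt v" "u = [] \<or> v = [] \<or> fst (last u) \<noteq> fst (hd v)"
  shows "alt (u @ v)"
  using assms by (auto simp: alt_def successively_append_iff)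

lemma Psi_merge_ctx: "Psi (x @ (u0 @ (k, a) # (k, b) # u1) @ y) = Psi (x @ (u0 @ (k, a * b) # u1) @ y)"
  by (simp add: Psi_def iota_mult mult.assoc)

lemma Psi_split_ctx: "Psi (x @ (u0 @ (k, a) # u1) @ y) = \<phi> a * Psi (x @ (u0 @ u1) @ y) + Psi (x @ (u0 @ (k, cen a) # u1) @ y)"
  using Psi_split[of "x @ u0" k a "u1 @ y"] by simp

lemma Z1:
  assumes "alt u" "alt v" "v \<noteq> []" "idx v \<inter> idx u = {}"
  shows "idx v \<inter> idx u' = {} \<Longrightarrow> Psi (u @ v @ u') = 0"
proof (induction u' rule: word_induct)
  case (merge u0 k a b u1)
  then show ?case using Psi_merge_ctx[of "u @ v" u0 k a b u1 "[]"] by simp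
next
  case (split u0 k a u1)
  then show ?case using Psi_split_ctx[of "u @ v" u0 k a u1 "[]"] by simp
next
  case (base w)
  have "alt (u @ v)"
    using assms base by (intro alt_append) auto
  moreover have "w = [] \<or> fst (last (u @ v)) \<noteq> fst (hd w)"
  proof (cases "w = []")
    case False
    then have "fst (last (u @ v)) \<in> idx v" "fst (hd w) \<in> idx w" using assms(3) by (auto simp: idx_def)
    then show ?thesis using base(2) by auto
  qed simp
  ultimately have "alt ((u @ v) @ w)"
    using base(1) alt_append2[of "u @ v" w] by blast
  then show ?case using assms(3) by (intro Psi_alt) auto
qed

lemma Z2:
  assumes "alt v" "v \<noteq> []"
  shows "\<forall>u'. idx v \<inter> (idx u \<union> idx u') = {} \<longrightarrow> Psi (u @ v @ u') = 0"
proof (induction u rule: word_induct)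
  case (merge u0 k a b u1)
  then show ?case using Psi_merge_ctx[of "[]" u0 k a b u1] by simp
next
  case (split u0 k a u1)
  then show ?case using Psi_split_ctx[of "[]" u0 k a u1] by simp
next
  case (base w)
  then show ?case using Z1[OF base assms] by blast
qed

lemma Lfree:
  "\<forall>u u'. idx v \<inter> (idx u \<union> idx u') = {} \<longrightarrow> Psi (u @ v @ u') = Psi v * Psi (u @ u')"
proof (induction v rule: word_induct)
  case (merge v0 k a b v1)
  then show ?case using Psi_merge_ctx[of _ v0 k a b v1] Psi_merge_ctx[of "[]" v0 k a b v1 "[]"] by simp
next
  case (split v0 k a v1)
  show ?case
  proof (intro allI impI)
    fix u u' assume d: "idx (v0 @ (k, a) # v1) \<inter> (idx u \<union> idx u') = {}"
    have "Psi (u @ (v0 @ (k, a) # v1) @ u') = \<phi> a * Psi (u @ (v0 @ v1) @ u') + Psi (u @ (v0 @ (k, cen a) # v1) @ u')"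
      by (rule Psi_split_ctx)
    also have "\<dots> = \<phi> a * (Psi (v0 @ v1) * Psi (u @ u')) + Psi (v0 @ (k, cen a) # v1) * Psi (u @ u')"
      using split.IH d by auto
    also have "\<dots> = Psi (v0 @ (k, a) # v1) * Psi (u @ u')"
      using Psi_split_ctx[of "[]" v0 k a v1 "[]"] by (simp add: algebra_simps)
    finally show "Psi (u @ (v0 @ (k, a) # v1) @ u') = Psi (v0 @ (k, a) # v1) * Psi (u @ u')" .
  qed
next
  case (base v)
  show ?case
  proof (cases "v = []")
    case False
    then show ?thesis using Z2[OF base False] Psi_alt[OF False base] by auto
  qed simp
qed

lemma L_free: "idx v \<inter> idx (u @ u') = {} \<Longrightarrow> Psi (u @ v @ u') = Psi v * Psi (u @ u')"
  using Lfree by simp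

definition rl :: "(nat \<Rightarrow> nat) \<Rightarrow> (nat \<times> 'a) list \<Rightarrow> (nat \<times> 'a) list" where
  "rl r w = map (\<lambda>(k, a). (r k, a)) w"

lemma rl_simps[simp]: "rl r [] = []" "rl r ((k, a) # w) = (r k, a) # rl r w" "rl r (u @ v) = rl r u @ rl r v"
  by (auto simp: rl_def)

lemma relabel: "inj_on r (idx w) \<Longrightarrow> Psi (rl r w) = Psi w"
proof (induction w rule: word_induct)
  case (merge u0 k a b u1)
  then show ?case using Psi_merge_ctx[of "[]" u0 k a b u1 "[]"] Psi_merge_ctx[of "[]" "rl r u0" "r k" a b "rl r u1" "[]"]
    by simp
next
  case (split u0 k a u1)
  have i1: "inj_on r (idx (u0 @ u1))" and i2: "inj_on r (idx (u0 @ (k, cen a) # u1))"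
    using split.prems by (auto intro: inj_on_subset)
  show ?case using split.IH(1)[OF i1] split.IH(2)[OF i2] Psi_split_ctx[of "[]" u0 k a u1 "[]"]
      Psi_split_ctx[of "[]" "rl r u0" "r k" a "rl r u1" "[]"] by simp
next
  case (base w)
  have "alt (rl r w)"
    using base(1) base(2)
  proof (induction w)
    case (Cons x w)
    then show ?case
    proof (cases w)
      case (Cons y w')
      have "r (fst x) \<noteq> r (fst y)"
        using Cons.prems Cons by (auto simp: alt_def inj_on_def)
      moreover have "alt (rl r w)" using Cons.prems Cons.IH by (auto simp: alt_def inj_on_def \<open>w = _\<close>)
      ultimately show ?thesis using Cons.prems \<open>w = _\<close>
        by (cases x; cases y) (auto simp: alt_def)
    qed (cases x; auto simp: alt_def)
  qed (simp add: rl_def)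
  then show ?case using base Psi_alt by (cases "w = []") (auto simp: rl_def)
qed

end



lemma sl_concat:
  assumes "finite L" "finite M" "\<forall>x\<in>L. \<forall>y\<in>M. x < y"
  shows "sorted_list_of_set (L \<union> M) = sorted_list_of_set L @ sorted_list_of_set (M :: nat set)"
proof (rule sorted_distinct_set_unique)
  show "sorted (sorted_list_of_set L @ sorted_list_of_set M)"
    using assms by (auto simp: sorted_append less_imp_le)
  show "distinct (sorted_list_of_set L @ sorted_list_of_set M)"
    using assms by auto
qed (use assms in auto)

lemma partition_remove:
  assumes "partition_on A \<pi>" "B \<in> \<pi>"
  shows "partition_on (A - B) (\<pi> - {B})"
proof -
  have d: "disjoint \<pi>" and u: "\<Union>\<pi> = A" and e: "{} \<notin> \<pi>" using assms(1) unfolding partition_on_def by auto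
  have "\<Union>(\<pi> - {B}) = A - B"
  proof
    show "\<Union>(\<pi> - {B}) \<subseteq> A - B"
    proof
      fix x assume "x \<in> \<Union>(\<pi> - {B})"
      then obtain C where C: "C \<in> \<pi>" "C \<noteq> B" "x \<in> C" by blast
      then have "C \<inter> B = {}" using disjointD[OF d C(1) assms(2) C(2)] by simp
      then show "x \<in> A - B" using C u by blast
    qed
  qed (use u in blast)
  moreover have "disjoint (\<pi> - {B})" using d by (rule pairwise_subset) blast
  ultimately show ?thesis using e unfolding partition_on_def by blast
qed

lemma partition_block_unique:
  assumes "partition_on A \<pi>" "B \<in> \<pi>" "C \<in> \<pi>" "x \<in> B" "x \<in> C"
  shows "B = C"
proof (rule ccontr)
  assume "B \<noteq> C"
  then have "B \<inter> C = {}" using assms partition_onD2 disjointD by metis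
  then show False using assms by blast
qed

lemma ncD:
  assumes "noncrossing \<pi>" "B \<in> \<pi>" "B' \<in> \<pi>" "B \<noteq> B'" "i < j" "j < k" "k < l" "i \<in> B" "k \<in> B" "j \<in> B'" "l \<in> B'"
  shows False
proof -
  have "\<exists>B\<in>\<pi>. \<exists>B'\<in>\<pi>. B \<noteq> B' \<and>
      (\<exists>i j k l. i < j \<and> j < k \<and> k < l \<and> i \<in> B \<and> k \<in> B \<and> j \<in> B' \<and> l \<in> B')"
    apply (rule bexI[where x=B], rule bexI[where x=B'])
      apply (rule conjI, rule assms(4))
      apply (rule exI[where x=i], rule exI[where x=j], rule exI[where x=k], rule exI[where x=l])
    using assms(5-11) apply simp
    using assms(2,3) by simp_all
  then show False using assms(1) unfolding noncrossing_def by simp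
qed

lemma noncrossing_subset:
  assumes "noncrossing \<pi>" "\<pi>' \<subseteq> \<pi>"
  shows "noncrossing \<pi>'"
  unfolding noncrossing_def
proof (intro notI, elim bexE exE conjE)
  fix B B' i j k l assume h: "B\<in>\<pi>'" "B'\<in>\<pi>'" "B\<noteq>B'" "i<j" "j<k" "k<l" "i\<in>B" "k\<in>B" "j\<in>B'" "l\<in>B'"
  show False using ncD[OF assms(1), of B B' i j k l] h assms(2) by blast
qed

lemma interval_block:
  assumes fin: "finite A" and part: "partition_on A \<pi>" and nc: "noncrossing \<pi>" and ne: "\<pi> \<noteq> {}"
  shows "\<exists>B\<in>\<pi>. \<forall>a\<in>A. Min B < a \<and> a < Max B \<longrightarrow> a \<in> B"
proof -
  obtain B0 where "B0 \<in> \<pi>" using ne by auto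
  obtain B where B: "B \<in> \<pi>" and Bmin: "\<forall>C. C \<in> \<pi> \<longrightarrow> Max B - Min B \<le> Max C - Min C"
    using ex_has_least_nat[of "\<lambda>B. B \<in> \<pi>" B0 "\<lambda>B. Max B - Min B"] \<open>B0 \<in> \<pi>\<close> by blast
  have finb: "finite C" "C \<noteq> {}" if "C \<in> \<pi>" for C
    using that part fin unfolding partition_on_def by (auto intro: finite_subset)
  show ?thesis
  proof (rule bexI[OF _ B], intro ballI impI, rule ccontr)
    fix a assume a: "a \<in> A" "Min B < a \<and> a < Max B" "a \<notin> B"
    then obtain C where C: "C \<in> \<pi>" "a \<in> C" using part unfolding partition_on_def by blast
    have CB: "C \<noteq> B" using C a by blast
    have inside: "Min B < c \<and> c < Max B" if "c \<in> C" for c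
    proof -
      have mB: "Min B \<in> B" "Max B \<in> B" using finb[OF B] by auto
      have "c \<notin> B" using partition_block_unique[OF part B C(1) _ that] CB by blast
      then have "c \<noteq> Min B" "c \<noteq> Max B" using mB by auto
      moreover have "\<not> c < Min B"
      proof
        assume "c < Min B"
        then show False using ncD[OF nc C(1) B CB, of c "Min B" a "Max B"] a(2) mB that C by blast
      qed
      moreover have "\<not> c > Max B"
      proof
        assume "c > Max B"
        then show False using ncD[OF nc B C(1) CB[symmetric], of "Min B" a "Max B" c] a(2) mB that C by blast
      qed
      ultimately show ?thesis by auto
    qed
    have "Min C \<in> C" "Max C \<in> C" using finb[OF C(1)] by auto
    then have "Min B < Min C" "Max C < Max B" "Min C \<le> Max C" using inside finb[OF C(1)] by auto
    then have "Max C - Min C < Max B - Min B" by linarith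
    then show False using Bmin C(1) by fastforce
  qed
qed

context fes begin

definition word :: "(nat \<Rightarrow> nat) \<Rightarrow> (nat \<Rightarrow> 'a) \<Rightarrow> nat list \<Rightarrow> (nat \<times> 'a) list" where
  "word f X l = map (\<lambda>j. (f j, X j)) l"

lemma word_append[simp]: "word f X (l1 @ l2) = word f X l1 @ word f X l2"
  by (simp add: word_def)

lemma idx_word[simp]: "idx (word f X l) = f ` set l"
  by (force simp: word_def idx_def)

lemma G2:
  assumes "finite A" "partition_on A \<pi>" "noncrossing \<pi>"
    "\<forall>i\<in>A. \<forall>j\<in>A. f i = f j \<longrightarrow> (\<exists>B\<in>\<pi>. i \<in> B \<and> j \<in> B)"
  shows "Psi (word f X (sorted_list_of_set A)) = (\<Prod>B\<in>\<pi>. Psi (word f X (sorted_list_of_set B)))"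
  using assms
proof (induction "card \<pi>" arbitrary: A \<pi> rule: less_induct)
  case less
  show ?case
  proof (cases "\<pi> = {}")
    case True
    then have "A = {}" using less.prems(2) by (simp add: partition_on_def)
    then show ?thesis using True by (simp add: word_def)
  next
    case False
    have finpi: "finite \<pi>" using less.prems(1,2) finite_elements by blast
    obtain B where B: "B \<in> \<pi>" and int: "\<forall>a\<in>A. Min B < a \<and> a < Max B \<longrightarrow> a \<in> B"
      using interval_block[OF less.prems(1-3) False] by blast
    have BA: "B \<subseteq> A" "B \<noteq> {}" using B less.prems(2) unfolding partition_on_def by auto
    have finB: "finite B" using BA less.prems(1) by (auto intro: finite_subset)
    have mB: "Min B \<in> B" "Max B \<in> B" using finB BA by auto
    define L where "L = {a\<in>A. a < Min B}"
    define R where "R = {a\<in>A. Max B < a}"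
    have AL: "A = L \<union> (B \<union> R)"
    proof -
      have "a \<in> L \<union> (B \<union> R)" if "a \<in> A" for a
      proof -
        consider "a < Min B" | "a = Min B" | "Min B < a \<and> a < Max B" | "a = Max B" | "a > Max B" by linarith
        then show ?thesis using that int mB unfolding L_def R_def by cases auto
      qed
      moreover have "B \<subseteq> A" by (rule BA)
      ultimately show ?thesis unfolding L_def R_def by auto
    qed
    have BLR1: "x < y" if "x \<in> L" "y \<in> B" for x y
    proof -
      have "Min B \<le> y" using finB that by simp
      then show ?thesis using that by (simp add: L_def)
    qed
    have BLR2: "x < y" if "x \<in> B" "y \<in> R" for x y
    proof -
      have "x \<le> Max B" using finB that by simp
      then show ?thesis using that by (simp add: R_def)
    qed
    have BLR: "\<forall>x\<in>L. \<forall>y\<in>B. x < y" "\<forall>x\<in>B. \<forall>y\<in>R. x < y" "\<forall>x\<in>L. \<forall>y\<in>R. x < y"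
      using BLR1 BLR2 mB by (blast, blast, meson order.strict_trans)
    have finLR: "finite L" "finite R" using less.prems(1) by (auto simp: L_def R_def)
    have AB: "A - B = L \<union> R"
      using AL BLR by auto
    have slA: "sorted_list_of_set A = sorted_list_of_set L @ sorted_list_of_set B @ sorted_list_of_set R"
    proof -
      have "\<forall>x\<in>L. \<forall>y\<in>B \<union> R. x < y" using BLR by blast
      then show ?thesis using AL sl_concat[of L "B \<union> R"] sl_concat[of B R] BLR finLR finB by simp
    qed
    have slAB: "sorted_list_of_set (A - B) = sorted_list_of_set L @ sorted_list_of_set R"
      using AB sl_concat[of L R] BLR finLR by auto
    have disj: "idx (word f X (sorted_list_of_set B)) \<inter>
        idx (word f X (sorted_list_of_set L) @ word f X (sorted_list_of_set R)) = {}"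
    proof -
      have "f b \<noteq> f a" if "b \<in> B" "a \<in> L \<union> R" for a b
      proof
        assume "f b = f a"
        moreover have "a \<in> A" "b \<in> A" using that AL by auto
        ultimately obtain C where "C \<in> \<pi>" "b \<in> C" "a \<in> C" using less.prems(4) by blast
        then have "C = B" using partition_block_unique[OF less.prems(2) B] that by blast
        then show False using that \<open>a \<in> C\<close> AB by auto
      qed
      then show ?thesis using finLR finB by auto
    qed
    have 1: "Psi (word f X (sorted_list_of_set A)) =
       Psi (word f X (sorted_list_of_set B)) * Psi (word f X (sorted_list_of_set (A - B)))"
      using L_free[OF disj] slA slAB by simp
    have IH: "Psi (word f X (sorted_list_of_set (A - B))) = (\<Prod>C\<in>\<pi> - {B}. Psi (word f X (sorted_list_of_set C)))"
    proof (rule less.hyps)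
      show "card (\<pi> - {B}) < card \<pi>" using B finpi by (meson card_Diff1_less)
      show "finite (A - B)" using less.prems(1) by simp
      show "partition_on (A - B) (\<pi> - {B})" using partition_remove[OF less.prems(2) B] .
      show "noncrossing (\<pi> - {B})" using less.prems(3) by (rule noncrossing_subset) blast
      show "\<forall>i\<in>A - B. \<forall>j\<in>A - B. f i = f j \<longrightarrow> (\<exists>C\<in>\<pi> - {B}. i \<in> C \<and> j \<in> C)"
        using less.prems(4) by blast
    qed
    show ?thesis using 1 IH prod.remove[OF finpi B, of "\<lambda>C. Psi (word f X (sorted_list_of_set C))"] by simp
  qed
qed

lemma iota_prod_list: "\<iota> k (prod_list xs) = prod_list (map (\<iota> k) xs)"
  by (induction xs) (auto simp: iota_one iota_mult)

lemma Psi_const_block: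
  assumes "\<forall>j\<in>B. f j = k"
  shows "Psi (word f X (sorted_list_of_set B)) = \<phi> (ord_prod X B)"
proof -
  have "word f X (sorted_list_of_set B) = map (\<lambda>j. (k, X j)) (sorted_list_of_set B)"
    using assms by (cases "finite B") (auto simp: word_def)
  moreover have "\<phi> (ord_prod X B) = \<psi> (\<iota> k (ord_prod X B))" by (simp add: psi_iota)
  ultimately show ?thesis
    by (simp add: Psi_def P_def ord_prod_def iota_prod_list comp_def)
qed

end

lemma block_index_eq:
  assumes "partition_on A \<sigma>" "finite A" "B \<in> \<sigma>" "j \<in> B"
  shows "block_index \<sigma> j = Min B"
proof -
  have finB: "finite B" "B \<noteq> {}" using assms unfolding partition_on_def by (auto intro: finite_subset)
  show ?thesis unfolding block_index_def
  proof (rule Least_equality)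
    show "\<exists>C\<in>\<sigma>. Min B \<in> C \<and> j \<in> C" using finB assms(4) by (intro bexI[OF _ assms(3)]) auto
    fix i assume "\<exists>C\<in>\<sigma>. i \<in> C \<and> j \<in> C"
    then obtain C where "C \<in> \<sigma>" "i \<in> C" "j \<in> C" by blast
    then have "C = B" using partition_block_unique[OF assms(1,3)] assms(4) by blast
    then show "Min B \<le> i" using finB \<open>i \<in> C\<close> by auto
  qed
qed

lemma block_index_kernel:
  assumes "partition_on A \<sigma>" "finite A" "i \<in> A" "j \<in> A" "block_index \<sigma> i = block_index \<sigma> j"
  shows "\<exists>B\<in>\<sigma>. i \<in> B \<and> j \<in> B"
proof -
  obtain B C where B: "B \<in> \<sigma>" "i \<in> B" and C: "C \<in> \<sigma>" "j \<in> C"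
    using assms unfolding partition_on_def by blast
  have finB: "finite B" "B \<noteq> {}" "finite C" "C \<noteq> {}"
    using assms B C unfolding partition_on_def by (auto intro: finite_subset)
  have "Min B = Min C" using assms block_index_eq[OF assms(1,2) B] block_index_eq[OF assms(1,2) C] by simp
  then have "Min B \<in> C" using finB by (metis Min_in)
  then have "B = C" using partition_block_unique[OF assms(1) B(1) C(1)] finB by (metis Min_in)
  then show ?thesis using B C by blast
qed



definition parts :: "nat set \<Rightarrow> nat set set set" where
  "parts A = {\<tau>. partition_on A \<tau>}"

fun mobG :: "nat set \<Rightarrow> nat \<Rightarrow> nat set set \<Rightarrow> nat set set \<Rightarrow> int" where
  "mobG A 0 \<sigma> \<pi> = 0"
| "mobG A (Suc f) \<sigma> \<pi> =
     (if \<sigma> = \<pi> then 1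
      else if refines \<sigma> \<pi> then
        - (\<Sum>\<tau>\<in>{\<tau> \<in> parts A. refines \<sigma> \<tau> \<and> refines \<tau> \<pi> \<and> \<tau> \<noteq> \<pi>}. mobG A f \<sigma> \<tau>)
      else 0)"

lemma mobius_aux_mobG: "mobius_aux n f \<sigma> \<pi> = mobG {1..n} f \<sigma> \<pi>"
  by (induction f arbitrary: \<pi>) (simp_all add: set_partitions_def parts_def)

lemma finite_parts: "finite A \<Longrightarrow> finite (parts A)"
  unfolding parts_def by (rule finitely_many_partition_on)

lemma part_blocks: "partition_on A \<sigma> \<Longrightarrow> finite A \<Longrightarrow> C \<in> \<sigma> \<Longrightarrow> finite C \<and> C \<noteq> {} \<and> C \<subseteq> A"
  unfolding partition_on_def by (auto intro: finite_subset)

lemma card_part_le: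
  assumes "finite A" "partition_on A \<sigma>"
  shows "card \<sigma> \<le> card A"
proof -
  have "card A = (\<Sum>p\<in>\<sigma>. card p)"
    using product_partition[OF assms(2)] part_blocks[OF assms(2,1)] by blast
  moreover have "(\<Sum>p\<in>\<sigma>. 1) \<le> (\<Sum>p\<in>\<sigma>. card p)"
    using part_blocks[OF assms(2,1)] by (intro sum_mono) (simp add: Suc_leI card_gt_0_iff)
  ultimately show ?thesis by simp
qed

lemma card_part_ge1:
  assumes "finite A" "partition_on A \<sigma>" "A \<noteq> {}"
  shows "1 \<le> card \<sigma>"
proof -
  have "\<sigma> \<noteq> {}" using assms by (auto simp: partition_on_def)
  moreover have "finite \<sigma>" using assms finite_elements by blast
  ultimately show ?thesis by (simp add: Suc_leI card_gt_0_iff)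
qed

lemma refines_block:
  assumes "partition_on A \<tau>" "C \<noteq> {}" "D \<in> \<tau>" "C \<subseteq> D" "D' \<in> \<tau>" "C \<subseteq> D'"
  shows "D' = D"
proof -
  obtain x where x: "x \<in> C" using assms(2) by blast
  have "x \<in> D'" "x \<in> D" using assms(4,6) x by auto
  then show ?thesis using partition_block_unique[OF assms(1) assms(5) assms(3), of x] by simp
qed

lemma refines_card:
  assumes fin: "finite A" and ps: "partition_on A \<sigma>" and pt: "partition_on A \<tau>" and r: "refines \<sigma> \<tau>"
  shows "card \<tau> \<le> card \<sigma>" "\<sigma> \<noteq> \<tau> \<Longrightarrow> card \<tau> < card \<sigma>"
proof -
  define g where "g C = (THE D. D \<in> \<tau> \<and> C \<subseteq> D)" for C
  have g: "g C \<in> \<tau> \<and> C \<subseteq> g C" if "C \<in> \<sigma>" for C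
  proof -
    have "\<exists>D\<in>\<tau>. C \<subseteq> D" using r that by (simp add: Defs.refines_def)
    then obtain D where D: "D \<in> \<tau>" "C \<subseteq> D" by blast
    have ne: "C \<noteq> {}" using part_blocks[OF ps fin that] by blast
    have "g C = D" unfolding g_def
    proof (rule the_equality)
      show "D \<in> \<tau> \<and> C \<subseteq> D" using D by simp
      fix D' assume "D' \<in> \<tau> \<and> C \<subseteq> D'"
      then show "D' = D" using refines_block[OF pt ne] D by blast
    qed
    then show ?thesis using D by simp
  qed
  have finS: "finite \<sigma>" "finite \<tau>" using fin ps pt finite_elements by blast+
  have tau_img: "\<tau> = g ` \<sigma>"
  proof
    show "g ` \<sigma> \<subseteq> \<tau>" using g by auto
    show "\<tau> \<subseteq> g ` \<sigma>"
    proof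
      fix D assume D: "D \<in> \<tau>"
      obtain x where x: "x \<in> D" using part_blocks[OF pt fin D] by blast
      have "x \<in> A" using part_blocks[OF pt fin D] x by blast
      then obtain C where C: "C \<in> \<sigma>" "x \<in> C" using ps unfolding partition_on_def by blast
      have gC: "g C \<in> \<tau>" "x \<in> g C" using g[OF C(1)] C(2) by auto
      have "g C = D" by (rule partition_block_unique[OF pt gC(1) D gC(2) x])
      then show "D \<in> g ` \<sigma>" using C by blast
    qed
  qed
  show le: "card \<tau> \<le> card \<sigma>" using tau_img card_image_le finS by simp
  assume ne: "\<sigma> \<noteq> \<tau>"
  show "card \<tau> < card \<sigma>"
  proof (rule ccontr)
    assume "\<not> card \<tau> < card \<sigma>"
    then have "card (g ` \<sigma>) = card \<sigma>" using le tau_img by simp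
    then have inj: "inj_on g \<sigma>" using finS by (simp add: eq_card_imp_inj_on)
    have "C \<in> \<tau>" if C: "C \<in> \<sigma>" for C
    proof -
      have "g C \<subseteq> C"
      proof
        fix x assume x: "x \<in> g C"
        have "x \<in> A" using part_blocks[OF pt fin] g[OF C] x by blast
        then obtain C' where C': "C' \<in> \<sigma>" "x \<in> C'" using ps unfolding partition_on_def by blast
        have gC': "g C' \<in> \<tau>" "x \<in> g C'" using g[OF C'(1)] C'(2) by auto
        have "g C' = g C" by (rule partition_block_unique[OF pt gC'(1) _ gC'(2) x]) (use g[OF C] in simp)
        then have "C' = C" using inj C C' by (meson inj_onD)
        then show "x \<in> C" using C' by simp
      qed
      then have "g C = C" using g[OF C] by blast
      then show ?thesis using g[OF C] by simp
    qed
    then have "\<sigma> \<subseteq> \<tau>" by blast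
    moreover have "card \<tau> = card \<sigma>" using le \<open>\<not> card \<tau> < card \<sigma>\<close> by simp
    ultimately have "\<sigma> = \<tau>" using finS by (simp add: card_subset_eq)
    then show False using ne by simp
  qed
qed

lemma mobG_adequate:
  assumes fin: "finite A" and ps: "partition_on A \<sigma>"
  shows "partition_on A \<pi> \<Longrightarrow> f > card \<sigma> - card \<pi> \<Longrightarrow> f' > card \<sigma> - card \<pi> \<Longrightarrow> mobG A f \<sigma> \<pi> = mobG A f' \<sigma> \<pi>"
proof (induction f arbitrary: f' \<pi>)
  case 0
  then show ?case by simp
next
  case (Suc g)
  obtain g' where f': "f' = Suc g'" using Suc.prems(3) by (cases f') auto
  have eq: "mobG A g \<sigma> \<tau> = mobG A g' \<sigma> \<tau>"
    if "\<tau> \<in> {\<tau> \<in> parts A. refines \<sigma> \<tau> \<and> refines \<tau> \<pi> \<and> \<tau> \<noteq> \<pi>}" for \<tau>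
  proof -
    have pt: "partition_on A \<tau>" and r1: "refines \<sigma> \<tau>" and r2: "refines \<tau> \<pi>" and ne: "\<tau> \<noteq> \<pi>"
      using that by (auto simp: parts_def)
    have "card \<tau> \<le> card \<sigma>" using refines_card(1)[OF fin ps pt r1] .
    moreover have "card \<pi> < card \<tau>" using refines_card(2)[OF fin pt Suc.prems(1) r2 ne] .
    ultimately show ?thesis using Suc.prems(2,3) f' by (intro Suc.IH pt) auto
  qed
  have "(\<Sum>\<tau>\<in>{\<tau> \<in> parts A. refines \<sigma> \<tau> \<and> refines \<tau> \<pi> \<and> \<tau> \<noteq> \<pi>}. mobG A g \<sigma> \<tau>) =
        (\<Sum>\<tau>\<in>{\<tau> \<in> parts A. refines \<sigma> \<tau> \<and> refines \<tau> \<pi> \<and> \<tau> \<noteq> \<pi>}. mobG A g' \<sigma> \<tau>)"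
    by (rule sum.cong[OF refl eq])
  then show ?case unfolding f' mobG.simps(2) by simp
qed

definition mu :: "nat set \<Rightarrow> nat set set \<Rightarrow> nat set set \<Rightarrow> int" where
  "mu A \<sigma> \<pi> = mobG A (Suc (card A)) \<sigma> \<pi>"

lemma mobius_mu: "mobius n \<sigma> \<pi> = mu {1..n} \<sigma> \<pi>"
  by (simp add: mobius_def mu_def mobius_aux_mobG)

lemma mu_rec:
  assumes fin: "finite A" and ps: "partition_on A \<sigma>" and pp: "partition_on A \<pi>"
  shows "mu A \<sigma> \<pi> = (if \<sigma> = \<pi> then 1 else if refines \<sigma> \<pi> then
      - (\<Sum>\<tau>\<in>{\<tau> \<in> parts A. refines \<sigma> \<tau> \<and> refines \<tau> \<pi> \<and> \<tau> \<noteq> \<pi>}. mu A \<sigma> \<tau>) else 0)"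
proof (cases "A = {}")
  case True
  then have "\<sigma> = \<pi>" using ps pp by (simp add: partition_on_empty)
  then show ?thesis by (simp add: mu_def)
next
  case False
  have eq: "mobG A (card A) \<sigma> \<tau> = mobG A (Suc (card A)) \<sigma> \<tau>" if "\<tau> \<in> parts A" for \<tau>
  proof -
    have pt: "partition_on A \<tau>" using that by (simp add: parts_def)
    have "card \<sigma> \<le> card A" "1 \<le> card \<tau>" "1 \<le> card A"
      using card_part_le[OF fin ps] card_part_ge1[OF fin pt False] False fin by (auto simp: Suc_leI card_gt_0_iff)
    then show ?thesis by (intro mobG_adequate[OF fin ps pt]) auto
  qed
  have "(\<Sum>\<tau>\<in>{\<tau> \<in> parts A. refines \<sigma> \<tau> \<and> refines \<tau> \<pi> \<and> \<tau> \<noteq> \<pi>}. mobG A (card A) \<sigma> \<tau>) =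
        (\<Sum>\<tau>\<in>{\<tau> \<in> parts A. refines \<sigma> \<tau> \<and> refines \<tau> \<pi> \<and> \<tau> \<noteq> \<pi>}. mobG A (Suc (card A)) \<sigma> \<tau>)"
    by (rule sum.cong[OF refl eq]) simp
  then show ?thesis unfolding mu_def mobG.simps(2) by simp
qed

definition img :: "(nat \<Rightarrow> nat) \<Rightarrow> nat set set \<Rightarrow> nat set set" where
  "img h \<sigma> = (`) h ` \<sigma>"

lemma img_part:
  assumes "bij_betw h A A'" "partition_on A \<sigma>"
  shows "partition_on A' (img h \<sigma>)"
proof -
  have "partition_on (h ` A) ((`) h ` \<sigma> - {{}})"
    using partition_on_inj_image[OF assms(2), of h] assms(1) by (simp add: bij_betw_def)
  moreover have "{} \<notin> (`) h ` \<sigma>" using assms(2) by (auto simp: partition_on_def)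
  ultimately show ?thesis using assms(1) by (simp add: img_def bij_betw_def)
qed

lemma img_refines:
  assumes "refines \<sigma> \<tau>"
  shows "refines (img h \<sigma>) (img h \<tau>)"
  unfolding Defs.refines_def
proof
  fix b assume "b \<in> img h \<sigma>"
  then obtain C where C: "C \<in> \<sigma>" "b = h ` C" by (auto simp: img_def)
  have "\<exists>D\<in>\<tau>. C \<subseteq> D" using assms C(1) by (simp add: Defs.refines_def)
  then obtain D where D: "D \<in> \<tau>" "C \<subseteq> D" by blast
  show "\<exists>c\<in>img h \<tau>. b \<subseteq> c"
    using D C(2) by (intro bexI[of _ "h ` D"]) (auto simp: img_def)
qed

lemma img_img:
  assumes "bij_betw h A A'" "partition_on A \<sigma>"
  shows "img (inv_into A h) (img h \<sigma>) = \<sigma>"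
proof -
  have "inv_into A h ` h ` C = C" if "C \<in> \<sigma>" for C
  proof -
    have "C \<subseteq> A" using that assms(2) by (auto simp: partition_on_def)
    then show ?thesis using assms(1) by (simp add: bij_betw_def image_image subset_iff cong: image_cong)
  qed
  then show ?thesis by (simp add: img_def image_image)
qed

lemma img_img2:
  assumes "bij_betw h A A'" "partition_on A' \<tau>"
  shows "img h (img (inv_into A h) \<tau>) = \<tau>"
proof -
  have "h ` inv_into A h ` C = C" if "C \<in> \<tau>" for C
  proof -
    have "C \<subseteq> h ` A" using that assms by (auto simp: partition_on_def bij_betw_def)
    then have "\<forall>y\<in>C. h (inv_into A h y) = y" by (auto intro: f_inv_into_f)
    then show ?thesis by (simp add: image_image)
  qed
  then show ?thesis by (simp add: img_def image_image)
qed

lemma img_facts: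
  assumes b: "bij_betw h A A'" and ps: "partition_on A \<sigma>" and pt: "partition_on A \<tau>"
  shows "refines (img h \<sigma>) (img h \<tau>) \<longleftrightarrow> refines \<sigma> \<tau>"
    and "img h \<sigma> = img h \<tau> \<longleftrightarrow> \<sigma> = \<tau>"
proof -
  show "refines (img h \<sigma>) (img h \<tau>) \<longleftrightarrow> refines \<sigma> \<tau>"
  proof
    assume "refines (img h \<sigma>) (img h \<tau>)"
    then have "refines (img (inv_into A h) (img h \<sigma>)) (img (inv_into A h) (img h \<tau>))" by (rule img_refines)
    then show "refines \<sigma> \<tau>" by (simp only: img_img[OF b ps] img_img[OF b pt])
  qed (rule img_refines)
  show "img h \<sigma> = img h \<tau> \<longleftrightarrow> \<sigma> = \<tau>"
  proof
    assume "img h \<sigma> = img h \<tau>"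
    then have "img (inv_into A h) (img h \<sigma>) = img (inv_into A h) (img h \<tau>)" by simp
    then show "\<sigma> = \<tau>" by (simp only: img_img[OF b ps] img_img[OF b pt])
  qed simp
qed

lemma mobG_img:
  assumes b: "bij_betw h A A'" and ps: "partition_on A \<sigma>"
  shows "partition_on A \<pi> \<Longrightarrow> mobG A f \<sigma> \<pi> = mobG A' f (img h \<sigma>) (img h \<pi>)"
proof (induction f arbitrary: \<pi>)
  case 0
  then show ?case by simp
next
  case (Suc f)
  define g where "g = inv_into A h"
  have b': "bij_betw g A' A" using b unfolding g_def by (rule bij_betw_inv_into)
  define S where "S = {\<tau> \<in> parts A. refines \<sigma> \<tau> \<and> refines \<tau> \<pi> \<and> \<tau> \<noteq> \<pi>}"
  define S' where "S' = {\<tau> \<in> parts A'. refines (img h \<sigma>) \<tau> \<and> refines \<tau> (img h \<pi>) \<and> \<tau> \<noteq> img h \<pi>}"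
  have sums: "(\<Sum>\<tau>\<in>S. mobG A f \<sigma> \<tau>) = (\<Sum>\<tau>\<in>S'. mobG A' f (img h \<sigma>) \<tau>)"
  proof (rule sum.reindex_bij_witness[where i = "img g" and j = "img h"])
    fix a assume a: "a \<in> S"
    then have pa: "partition_on A a" by (simp add: S_def parts_def)
    show "img g (img h a) = a" unfolding g_def by (rule img_img[OF b pa])
    show "img h a \<in> S'" using a img_part[OF b pa] img_facts[OF b ps pa] img_facts[OF b pa Suc.prems]
      by (simp add: S_def S'_def parts_def)
    show "mobG A' f (img h \<sigma>) (img h a) = mobG A f \<sigma> a" using Suc.IH[OF pa] by simp
  next
    fix b0 assume a: "b0 \<in> S'"
    then have pa: "partition_on A' b0" by (simp add: S'_def parts_def)
    have pga: "partition_on A (img g b0)" by (rule img_part[OF b' pa])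
    have e: "img h (img g b0) = b0"
      unfolding g_def by (rule img_img2[OF b pa])
    show "img h (img g b0) = b0" by (rule e)
    show "img g b0 \<in> S" using a pga img_facts[OF b ps pga] img_facts[OF b pga Suc.prems] e
      by (simp add: S_def S'_def parts_def)
  qed
  show ?case
    unfolding mobG.simps(2) S_def[symmetric] S'_def[symmetric] sums[symmetric]
    using img_facts[OF b ps Suc.prems] by simp
qed

lemma mu_img:
  assumes b: "bij_betw h A A'" and ps: "partition_on A \<sigma>" and pp: "partition_on A \<pi>"
  shows "mu A \<sigma> \<pi> = mu A' (img h \<sigma>) (img h \<pi>)"
proof -
  have "card A' = card A" using bij_betw_same_card[OF b] by simp
  then show ?thesis unfolding mu_def using mobG_img[OF b ps pp, of "Suc (card A)"] by (simp del: mobG.simps)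
qed

definition res :: "nat set set \<Rightarrow> nat set \<Rightarrow> nat set set" where
  "res \<tau> B = {C \<in> \<tau>. C \<subseteq> B}"

lemma refines_refl: "refines \<sigma> \<sigma>"
  by (auto simp: Defs.refines_def)

lemma refinesD: "refines \<sigma> \<tau> \<Longrightarrow> C \<in> \<sigma> \<Longrightarrow> \<exists>D\<in>\<tau>. C \<subseteq> D"
  by (simp add: Defs.refines_def)

lemma refinesI: "(\<And>C. C \<in> \<sigma> \<Longrightarrow> \<exists>D\<in>\<tau>. C \<subseteq> D) \<Longrightarrow> refines \<sigma> \<tau>"
  by (simp add: Defs.refines_def)

lemma res_part:
  assumes fin: "finite A" and pt: "partition_on A \<tau>" and pp: "partition_on A \<pi>" and r: "refines \<tau> \<pi>" and B: "B \<in> \<pi>"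
  shows "partition_on B (res \<tau> B)"
proof -
  have "\<Union>(res \<tau> B) = B"
  proof
    show "\<Union>(res \<tau> B) \<subseteq> B" by (auto simp: res_def)
    show "B \<subseteq> \<Union>(res \<tau> B)"
    proof
      fix x assume x: "x \<in> B"
      then have "x \<in> A" using part_blocks[OF pp fin B] by blast
      then obtain C where C: "C \<in> \<tau>" "x \<in> C" using pt by (auto simp: partition_on_def)
      obtain D where D: "D \<in> \<pi>" "C \<subseteq> D" using refinesD[OF r C(1)] by blast
      have "D = B" using partition_block_unique[OF pp D(1) B, of x] D(2) C(2) x by blast
      then show "x \<in> \<Union>(res \<tau> B)" using C D by (auto simp: res_def)
    qed
  qed
  moreover have "disjoint (res \<tau> B)" using partition_onD2[OF pt] by (rule pairwise_subset) (auto simp: res_def)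
  moreover have "{} \<notin> res \<tau> B" using partition_onD3[OF pt] by (auto simp: res_def)
  ultimately show ?thesis by (simp add: partition_on_def)
qed

lemma res_refines:
  assumes fin: "finite A" and ps: "partition_on A \<sigma>" and pp: "partition_on A \<pi>"
    and r1: "refines \<sigma> \<tau>" and r2: "refines \<tau> \<pi>" and B: "B \<in> \<pi>"
  shows "refines (res \<sigma> B) (res \<tau> B)"
proof (rule refinesI)
  fix C assume "C \<in> res \<sigma> B"
  then have C: "C \<in> \<sigma>" "C \<subseteq> B" by (auto simp: res_def)
  obtain E where E: "E \<in> \<tau>" "C \<subseteq> E" using refinesD[OF r1 C(1)] by blast
  obtain D where D: "D \<in> \<pi>" "E \<subseteq> D" using refinesD[OF r2 E(1)] by blast
  have ne: "C \<noteq> {}" using part_blocks[OF ps fin C(1)] by blast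
  have "D = B" using refines_block[OF pp ne B C(2) D(1)] D(2) E(2) by blast
  then show "\<exists>D\<in>res \<tau> B. C \<subseteq> D" using E D by (auto simp: res_def)
qed

lemma res_Union:
  assumes "refines \<tau> \<pi>"
  shows "(\<Union>B\<in>\<pi>. res \<tau> B) = \<tau>"
proof
  show "(\<Union>B\<in>\<pi>. res \<tau> B) \<subseteq> \<tau>" by (auto simp: res_def)
  show "\<tau> \<subseteq> (\<Union>B\<in>\<pi>. res \<tau> B)"
  proof
    fix E assume "E \<in> \<tau>"
    then obtain D where "D \<in> \<pi>" "E \<subseteq> D" using refinesD[OF assms] by blast
    then show "E \<in> (\<Union>B\<in>\<pi>. res \<tau> B)" using \<open>E \<in> \<tau>\<close> by (auto simp: res_def)
  qed
qed

definition TT :: "nat set \<Rightarrow> nat set set \<Rightarrow> nat set set \<Rightarrow> nat set set set" where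
  "TT A \<sigma> \<pi> = {\<tau> \<in> parts A. refines \<sigma> \<tau> \<and> refines \<tau> \<pi>}"

definition TB :: "nat set set \<Rightarrow> nat set \<Rightarrow> nat set set set" where
  "TB \<sigma> B = {\<rho> \<in> parts B. refines (res \<sigma> B) \<rho>}"

lemma glue:
  assumes fin: "finite A" and ps: "partition_on A \<sigma>" and pp: "partition_on A \<pi>" and r: "refines \<sigma> \<pi>"
    and g: "g \<in> Pi\<^sub>E \<pi> (TB \<sigma>)"
  shows "(\<Union>B\<in>\<pi>. g B) \<in> TT A \<sigma> \<pi>" and "\<And>B0. B0 \<in> \<pi> \<Longrightarrow> res (\<Union>B\<in>\<pi>. g B) B0 = g B0"
proof -
  have gB: "partition_on B (g B)" "refines (res \<sigma> B) (g B)" if "B \<in> \<pi>" for B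
    using g that by (auto simp: TB_def parts_def)
  have sub: "E \<subseteq> B" "E \<noteq> {}" if "B \<in> \<pi>" "E \<in> g B" for B E
    using gB(1)[OF that(1)] that(2) by (auto simp: partition_on_def)
  let ?U = "\<Union>B\<in>\<pi>. g B"
  have "\<Union>?U = A"
  proof -
    have "\<Union>?U = (\<Union>B\<in>\<pi>. \<Union>(g B))" by blast
    also have "\<dots> = (\<Union>B\<in>\<pi>. B)" using gB(1) by (auto simp: partition_on_def)
    also have "\<dots> = A" using pp by (auto simp: partition_on_def)
    finally show ?thesis .
  qed
  moreover have "disjoint ?U"
  proof (rule disjointI)
    fix E E' assume E: "E \<in> ?U" "E' \<in> ?U" "E \<noteq> E'"
    then obtain B B' where BB: "B \<in> \<pi>" "E \<in> g B" "B' \<in> \<pi>" "E' \<in> g B'" by blast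
    show "E \<inter> E' = {}"
    proof (cases "B = B'")
      case True
      then show ?thesis using partition_onD2[OF gB(1)[OF BB(1)]] BB E(3) by (auto dest: disjointD)
    next
      case False
      then have "B \<inter> B' = {}" using partition_onD2[OF pp] BB by (auto dest: disjointD)
      then show ?thesis using sub[OF BB(1,2)] sub[OF BB(3,4)] by blast
    qed
  qed
  moreover have "{} \<notin> ?U" using sub by blast
  ultimately have pU: "partition_on A ?U" by (simp add: partition_on_def)
  have r1: "refines \<sigma> ?U"
  proof (rule refinesI)
    fix C assume C: "C \<in> \<sigma>"
    obtain D where D: "D \<in> \<pi>" "C \<subseteq> D" using refinesD[OF r C] by blast
    have "C \<in> res \<sigma> D" using C D by (simp add: res_def)
    then obtain E where "E \<in> g D" "C \<subseteq> E" using refinesD[OF gB(2)[OF D(1)]] by blast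
    then show "\<exists>E\<in>?U. C \<subseteq> E" using D by blast
  qed
  have r2: "refines ?U \<pi>"
  proof (rule refinesI)
    fix E assume "E \<in> ?U"
    then obtain B where "B \<in> \<pi>" "E \<in> g B" by blast
    then show "\<exists>D\<in>\<pi>. E \<subseteq> D" using sub by blast
  qed
  show "?U \<in> TT A \<sigma> \<pi>" using pU r1 r2 by (simp add: TT_def parts_def)
  fix B0 assume B0: "B0 \<in> \<pi>"
  show "res ?U B0 = g B0"
  proof
    show "g B0 \<subseteq> res ?U B0" using B0 sub by (auto simp: res_def)
    show "res ?U B0 \<subseteq> g B0"
    proof
      fix E assume "E \<in> res ?U B0"
      then obtain B where B: "B \<in> \<pi>" "E \<in> g B" "E \<subseteq> B0" by (auto simp: res_def)
      have "B = B0" using refines_block[OF pp sub(2)[OF B(1,2)] B0 B(3) B(1) sub(1)[OF B(1,2)]] .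
      then show "E \<in> g B0" using B by simp
    qed
  qed
qed

lemma sum_TT:
  assumes fin: "finite A" and ps: "partition_on A \<sigma>" and pp: "partition_on A \<pi>" and r: "refines \<sigma> \<pi>"
  shows "(\<Sum>\<tau>\<in>TT A \<sigma> \<pi>. F \<tau>) = (\<Sum>g\<in>Pi\<^sub>E \<pi> (TB \<sigma>). F (\<Union>B\<in>\<pi>. g B))"
proof (rule sum.reindex_bij_witness[where i = "\<lambda>g. \<Union>B\<in>\<pi>. g B" and j = "\<lambda>\<tau>. restrict (res \<tau>) \<pi>"])
  fix \<tau> assume t: "\<tau> \<in> TT A \<sigma> \<pi>"
  then have pt: "partition_on A \<tau>" and r1: "refines \<sigma> \<tau>" and r2: "refines \<tau> \<pi>"
    by (auto simp: TT_def parts_def)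
  show "(\<Union>B\<in>\<pi>. restrict (res \<tau>) \<pi> B) = \<tau>" using res_Union[OF r2] by simp
  show "restrict (res \<tau>) \<pi> \<in> Pi\<^sub>E \<pi> (TB \<sigma>)"
    using res_part[OF fin pt pp r2] res_refines[OF fin ps pp r1 r2] by (auto simp: TB_def parts_def)
  show "F (\<Union>B\<in>\<pi>. restrict (res \<tau>) \<pi> B) = F \<tau>" using res_Union[OF r2] by simp
next
  fix g assume g: "g \<in> Pi\<^sub>E \<pi> (TB \<sigma>)"
  show "(\<Union>B\<in>\<pi>. g B) \<in> TT A \<sigma> \<pi>" by (rule glue(1)[OF fin ps pp r g])
  show "restrict (res (\<Union>B\<in>\<pi>. g B)) \<pi> = g"
  proof (rule PiE_ext[OF _ g])
    show "restrict (res (\<Union>B\<in>\<pi>. g B)) \<pi> \<in> Pi\<^sub>E \<pi> (TB \<sigma>)"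
      using glue(2)[OF fin ps pp r g] g by (auto simp: PiE_def)
    show "\<And>B. B \<in> \<pi> \<Longrightarrow> restrict (res (\<Union>B\<in>\<pi>. g B)) \<pi> B = g B"
      using glue(2)[OF fin ps pp r g] by simp
  qed
qed

lemma res_self: "partition_on A \<pi> \<Longrightarrow> B \<in> \<pi> \<Longrightarrow> res \<pi> B = {B}"
proof -
  assume pp: "partition_on A \<pi>" and B: "B \<in> \<pi>"
  have "C = B" if "C \<in> \<pi>" "C \<subseteq> B" for C
  proof -
    have "C \<noteq> {}" using pp that(1) by (auto simp: partition_on_def)
    then show ?thesis using refines_block[OF pp _ B that(2) that(1)] by blast
  qed
  then show ?thesis using B by (auto simp: res_def)
qed

lemma res_res: "C \<subseteq> B \<Longrightarrow> res (res \<sigma> B) C = res \<sigma> C"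
  by (auto simp: res_def)

lemma card_part_2:
  assumes "partition_on B \<rho>" "\<rho> \<noteq> {B}" "B \<noteq> {}" "finite B"
  shows "2 \<le> card \<rho>"
proof -
  have "1 \<le> card \<rho>" using card_part_ge1[OF assms(4,1,3)] .
  moreover have "card \<rho> \<noteq> 1"
  proof
    assume "card \<rho> = 1"
    then obtain D where "\<rho> = {D}" by (auto simp: card_Suc_eq)
    then show False using assms(1,2) by (auto simp: partition_on_def)
  qed
  ultimately show ?thesis by linarith
qed

lemma card_A_pi:
  assumes fin: "finite A" and pp: "partition_on A \<pi>" and B0: "B0 \<in> \<pi>"
  shows "card B0 + card \<pi> \<le> card A + 1"
proof -
  have finpi: "finite \<pi>" using fin pp finite_elements by blast
  have "card A = (\<Sum>p\<in>\<pi>. card p)"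
    using product_partition[OF pp] part_blocks[OF pp fin] by blast
  also have "\<dots> = card B0 + (\<Sum>p\<in>\<pi> - {B0}. card p)" using sum.remove[OF finpi B0] by simp
  also have "(\<Sum>p\<in>\<pi> - {B0}. card p) \<ge> (\<Sum>p\<in>\<pi> - {B0}. 1)"
    using part_blocks[OF pp fin] by (intro sum_mono) (simp add: Suc_leI card_gt_0_iff)
  moreover have "(\<Sum>p\<in>\<pi> - {B0}. 1::nat) = card \<pi> - 1" using B0 finpi by simp
  moreover have "card \<pi> \<ge> 1"
  proof -
    have "0 < card \<pi>" using B0 finpi card_gt_0_iff by blast
    then show ?thesis by simp
  qed
  ultimately show ?thesis by linarith
qed

lemma mu_prod_aux:
  "\<forall>A \<sigma> \<pi>. finite A \<longrightarrow> partition_on A \<sigma> \<longrightarrow> partition_on A \<pi> \<longrightarrow> refines \<sigma> \<pi> \<longrightarrow>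
     card A - card \<pi> = m \<longrightarrow> mu A \<sigma> \<pi> = (\<Prod>B\<in>\<pi>. mu B (res \<sigma> B) {B})"
proof (induction m rule: less_induct)
  case (less m)
  show ?case
  proof (intro allI impI)
    fix A \<sigma> \<pi>
    assume fin: "finite A" and ps: "partition_on A \<sigma>" and pp: "partition_on A \<pi>" and r: "refines \<sigma> \<pi>"
      and m: "card A - card \<pi> = m"
    have finpi: "finite \<pi>" using fin pp finite_elements by blast
    define G where "G \<tau> = (\<Prod>C\<in>\<tau>. mu C (res \<sigma> C) {C})" for \<tau>
    show "mu A \<sigma> \<pi> = (\<Prod>B\<in>\<pi>. mu B (res \<sigma> B) {B})"
    proof (cases "\<sigma> = \<pi>")
      case True
      have "mu B (res \<sigma> B) {B} = 1" if "B \<in> \<pi>" for B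
        using res_self[OF pp that] True by (simp add: mu_def)
      then show ?thesis using True by (simp add: mu_def)
    next
      case False
      have TT_eq: "{\<tau> \<in> parts A. refines \<sigma> \<tau> \<and> refines \<tau> \<pi> \<and> \<tau> \<noteq> \<pi>} = TT A \<sigma> \<pi> - {\<pi>}"
        by (auto simp: TT_def)
      have finTT: "finite (TT A \<sigma> \<pi>)" using finite_parts[OF fin] by (auto simp: TT_def)
      have piTT: "\<pi> \<in> TT A \<sigma> \<pi>" using pp r refines_refl by (simp add: TT_def parts_def)
      have rec: "mu A \<sigma> \<pi> = - (\<Sum>\<tau>\<in>TT A \<sigma> \<pi> - {\<pi>}. mu A \<sigma> \<tau>)"
        using mu_rec[OF fin ps pp] False r TT_eq by simp
      have IH1: "mu A \<sigma> \<tau> = G \<tau>" if t: "\<tau> \<in> TT A \<sigma> \<pi> - {\<pi>}" for \<tau>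
      proof -
        have pt: "partition_on A \<tau>" and r1: "refines \<sigma> \<tau>" and r2: "refines \<tau> \<pi>" and ne: "\<tau> \<noteq> \<pi>"
          using t by (auto simp: TT_def parts_def)
        have "card \<pi> < card \<tau>" using refines_card(2)[OF fin pt pp r2 ne] .
        moreover have "card \<tau> \<le> card A" using card_part_le[OF fin pt] .
        ultimately have "card A - card \<tau> < m" using m by linarith
        then show ?thesis using less.IH fin ps pt r1 unfolding G_def by blast
      qed
      have zero: "(\<Sum>\<tau>\<in>TT A \<sigma> \<pi>. G \<tau>) = 0"
      proof -
        define H where "H B \<rho> = (\<Prod>C\<in>\<rho>. mu C (res \<sigma> C) {C})" for B :: "nat set" and \<rho>
        have "(\<Sum>\<tau>\<in>TT A \<sigma> \<pi>. G \<tau>) = (\<Sum>g\<in>Pi\<^sub>E \<pi> (TB \<sigma>). G (\<Union>B\<in>\<pi>. g B))"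
          by (rule sum_TT[OF fin ps pp r])
        also have "\<dots> = (\<Sum>g\<in>Pi\<^sub>E \<pi> (TB \<sigma>). \<Prod>B\<in>\<pi>. H B (g B))"
        proof (rule sum.cong[OF refl])
          fix g assume g: "g \<in> Pi\<^sub>E \<pi> (TB \<sigma>)"
          have gB: "partition_on B (g B)" if "B \<in> \<pi>" for B
            using g that by (auto simp: TB_def parts_def)
          have fing: "finite (g B)" if "B \<in> \<pi>" for B
            using gB[OF that] part_blocks[OF pp fin that] finite_elements by blast
          have disj: "g B \<inter> g B' = {}" if "B \<in> \<pi>" "B' \<in> \<pi>" "B \<noteq> B'" for B B'
          proof -
            have "B \<inter> B' = {}" using partition_onD2[OF pp] that by (auto dest: disjointD)
            moreover have "E \<subseteq> B" "E \<noteq> {}" if "E \<in> g B" for E using gB[OF \<open>B \<in> \<pi>\<close>] that by (auto simp: partition_on_def)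
            moreover have "E \<subseteq> B'" if "E \<in> g B'" for E using gB[OF \<open>B' \<in> \<pi>\<close>] that by (auto simp: partition_on_def)
            ultimately show ?thesis by blast
          qed
          show "G (\<Union>B\<in>\<pi>. g B) = (\<Prod>B\<in>\<pi>. H B (g B))"
            unfolding G_def H_def using finpi fing disj by (subst prod.UNION_disjoint) auto
        qed
        also have "\<dots> = (\<Prod>B\<in>\<pi>. \<Sum>\<rho>\<in>TB \<sigma> B. H B \<rho>)"
        proof (rule prod_sum_PiE[symmetric, OF finpi])
          fix B assume "B \<in> \<pi>"
          then show "finite (TB \<sigma> B)" using finite_parts part_blocks[OF pp fin] by (auto simp: TB_def)
        qed
        also have "\<dots> = 0"
        proof -
          obtain B0 where B0: "B0 \<in> \<pi>" "res \<sigma> B0 \<noteq> {B0}"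
          proof (rule ccontr)
            assume "\<not> thesis"
            then have "\<forall>B\<in>\<pi>. res \<sigma> B = {B}" using that by blast
            then have "\<sigma> = (\<Union>B\<in>\<pi>. {B})" using res_Union[OF r] by auto
            then show False using False by auto
          qed
          have bl: "finite B0" "B0 \<noteq> {}" "B0 \<subseteq> A" using part_blocks[OF pp fin B0(1)] by auto
          define \<sigma>0 where "\<sigma>0 = res \<sigma> B0"
          have p0: "partition_on B0 \<sigma>0" unfolding \<sigma>0_def by (rule res_part[OF fin ps pp r B0(1)])
          have Hres: "H B0 \<rho> = (\<Prod>C\<in>\<rho>. mu C (res \<sigma>0 C) {C})" if "\<rho> \<in> TB \<sigma> B0" for \<rho>
          proof -
            have "C \<subseteq> B0" if "C \<in> \<rho>" for C using \<open>\<rho> \<in> TB \<sigma> B0\<close> that by (auto simp: TB_def parts_def partition_on_def)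
            then show ?thesis unfolding H_def \<sigma>0_def using res_res by (intro prod.cong) auto
          qed
          have IH2: "mu B0 \<sigma>0 \<rho> = H B0 \<rho>" if t: "\<rho> \<in> TB \<sigma> B0 - {{B0}}" for \<rho>
          proof -
            have pr: "partition_on B0 \<rho>" and r0: "refines \<sigma>0 \<rho>" and ne: "\<rho> \<noteq> {B0}"
              using t by (auto simp: TB_def parts_def \<sigma>0_def)
            have "2 \<le> card \<rho>" by (rule card_part_2[OF pr ne bl(2) bl(1)])
            moreover have "card \<rho> \<le> card B0" by (rule card_part_le[OF bl(1) pr])
            moreover have "card B0 + card \<pi> \<le> card A + 1" by (rule card_A_pi[OF fin pp B0(1)])
            ultimately have "card B0 - card \<rho> < m" using m by linarith
            then have "mu B0 \<sigma>0 \<rho> = (\<Prod>C\<in>\<rho>. mu C (res \<sigma>0 C) {C})"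
              using less.IH bl(1) p0 pr r0 by blast
            then show ?thesis using Hres t by simp
          qed
          have single: "{B0} \<in> TB \<sigma> B0"
            using partition_on_space[OF bl(2)] p0 unfolding \<sigma>0_def
            by (auto simp: TB_def parts_def Defs.refines_def partition_on_def)
          have finTB: "finite (TB \<sigma> B0)" using finite_parts[OF bl(1)] by (auto simp: TB_def)
          have "(\<Sum>\<rho>\<in>TB \<sigma> B0. H B0 \<rho>) = H B0 {B0} + (\<Sum>\<rho>\<in>TB \<sigma> B0 - {{B0}}. H B0 \<rho>)"
            using sum.remove[OF finTB single] by simp
          also have "H B0 {B0} = mu B0 \<sigma>0 {B0}"
          proof -
            have "res \<sigma>0 B0 = \<sigma>0" using p0 by (auto simp: res_def partition_on_def)
            then show ?thesis using Hres[OF single] by simp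
          qed
          also have "(\<Sum>\<rho>\<in>TB \<sigma> B0 - {{B0}}. H B0 \<rho>) = (\<Sum>\<rho>\<in>TB \<sigma> B0 - {{B0}}. mu B0 \<sigma>0 \<rho>)"
            using IH2 by simp
          also have "mu B0 \<sigma>0 {B0} = - (\<Sum>\<rho>\<in>TB \<sigma> B0 - {{B0}}. mu B0 \<sigma>0 \<rho>)"
          proof -
            have ne: "\<sigma>0 \<noteq> {B0}" using B0(2) by (simp add: \<sigma>0_def)
            have r0: "refines \<sigma>0 {B0}" using p0 by (auto simp: Defs.refines_def partition_on_def)
            have rt: "refines \<tau> {B0}" if "partition_on B0 \<tau>" for \<tau>
              using that by (auto simp: Defs.refines_def partition_on_def)
            have eqS: "{\<tau> \<in> parts B0. refines \<sigma>0 \<tau> \<and> refines \<tau> {B0} \<and> \<tau> \<noteq> {B0}} = TB \<sigma> B0 - {{B0}}"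
              using rt by (auto simp: TB_def parts_def \<sigma>0_def)
            show ?thesis using mu_rec[OF bl(1) p0 partition_on_space[OF bl(2)]] ne r0 eqS by simp
          qed
          finally have "(\<Sum>\<rho>\<in>TB \<sigma> B0. H B0 \<rho>) = 0" by simp
          then show ?thesis using finpi B0(1) by (intro prod_zero) auto
        qed
        finally show ?thesis .
      qed
      have "mu A \<sigma> \<pi> = - (\<Sum>\<tau>\<in>TT A \<sigma> \<pi> - {\<pi>}. G \<tau>)" using rec IH1 by simp
      also have "\<dots> = G \<pi>" using zero sum.remove[OF finTT piTT, of G] by simp
      finally show ?thesis unfolding G_def .
    qed
  qed
qed

lemma mu_prod:
  assumes "finite A" "partition_on A \<sigma>" "partition_on A \<pi>" "refines \<sigma> \<pi>"
  shows "mu A \<sigma> \<pi> = (\<Prod>B\<in>\<pi>. mu B (res \<sigma> B) {B})"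
  using mu_prod_aux assms by blast



definition enum :: "nat set \<Rightarrow> nat \<Rightarrow> nat" where
  "enum B j = sorted_list_of_set B ! (j - 1)"

lemma enum_facts:
  assumes "finite B"
  shows "bij_betw (enum B) {1..card B} B"
    and "\<And>i j. i \<in> {1..card B} \<Longrightarrow> j \<in> {1..card B} \<Longrightarrow> i < j \<Longrightarrow> enum B i < enum B j"
    and "sorted_list_of_set B = map (enum B) [1..<card B + 1]"
proof -
  let ?l = "sorted_list_of_set B"
  have len: "length ?l = card B" by simp
  have dist: "distinct ?l" by simp
  have ss: "sorted_wrt (<) ?l" by simp
  show "sorted_list_of_set B = map (enum B) [1..<card B + 1]"
  proof (rule nth_equalityI)
    show "length ?l = length (map (enum B) [1..<card B + 1])" by simp
    fix i assume "i < length ?l"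
    then show "?l ! i = map (enum B) [1..<card B + 1] ! i" by (simp add: enum_def nth_map_upt del: upt_Suc)
  qed
  show "\<And>i j. i \<in> {1..card B} \<Longrightarrow> j \<in> {1..card B} \<Longrightarrow> i < j \<Longrightarrow> enum B i < enum B j"
  proof -
    fix i j assume ij: "i \<in> {1..card B}" "j \<in> {1..card B}" "i < j"
    then have "i - 1 < j - 1" "j - 1 < length ?l" using len by auto
    then show "enum B i < enum B j" unfolding enum_def by (rule sorted_wrt_nth_less[OF ss])
  qed
  show "bij_betw (enum B) {1..card B} B"
  proof (rule bij_betw_imageI)
    show "inj_on (enum B) {1..card B}"
    proof (rule inj_onI)
      fix i j assume ij: "i \<in> {1..card B}" "j \<in> {1..card B}" "enum B i = enum B j"
      then have "i - 1 = j - 1" unfolding enum_def using nth_eq_iff_index_eq[OF dist] len by auto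
      then show "i = j" using ij by auto
    qed
    show "enum B ` {1..card B} = B"
    proof
      show "enum B ` {1..card B} \<subseteq> B"
      proof
        fix x assume "x \<in> enum B ` {1..card B}"
        then obtain j where j: "j \<in> {1..card B}" "x = ?l ! (j - 1)" by (auto simp: enum_def)
        then have "x \<in> set ?l" using len by auto
        then show "x \<in> B" using assms by simp
      qed
      show "B \<subseteq> enum B ` {1..card B}"
      proof
        fix x assume "x \<in> B"
        then have "x \<in> set ?l" using assms by simp
        then obtain i where i: "i < card B" "?l ! i = x" using len by (auto simp: in_set_conv_nth)
        then have "enum B (Suc i) = x" by (simp add: enum_def)
        then show "x \<in> enum B ` {1..card B}" using i by force
      qed
    qed
  qed
qed

lemma refines_sing: "partition_on A \<sigma> \<Longrightarrow> refines ((\<lambda>x. {x}) ` A) \<sigma>"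
proof (rule refinesI)
  fix C assume p: "partition_on A \<sigma>" and "C \<in> (\<lambda>x. {x}) ` A"
  then obtain x where x: "x \<in> A" "C = {x}" by blast
  then obtain D where "D \<in> \<sigma>" "x \<in> D" using p by (auto simp: partition_on_def)
  then show "\<exists>D\<in>\<sigma>. C \<subseteq> D" using x by blast
qed

lemma TB_sing: "B \<subseteq> A \<Longrightarrow> TB ((\<lambda>x. {x}) ` A) B = parts B"
proof -
  assume BA: "B \<subseteq> A"
  have "refines (res ((\<lambda>x. {x}) ` A) B) \<rho>" if "partition_on B \<rho>" for \<rho>
  proof -
    have "res ((\<lambda>x. {x}) ` A) B = (\<lambda>x. {x}) ` B" using BA by (auto simp: res_def)
    then show ?thesis using refines_sing[OF that] by simp
  qed
  then show ?thesis by (auto simp: TB_def parts_def)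
qed

lemma bi_res:
  assumes fin: "finite A" and ps: "partition_on A \<sigma>" and pp: "partition_on A \<pi>" and r: "refines \<sigma> \<pi>"
    and B: "B \<in> \<pi>" and j: "j \<in> B"
  shows "block_index \<sigma> j = block_index (res \<sigma> B) j"
proof -
  have "j \<in> A" using part_blocks[OF pp fin B] j by blast
  then obtain C where C: "C \<in> \<sigma>" "j \<in> C" using ps by (auto simp: partition_on_def)
  obtain D where D: "D \<in> \<pi>" "C \<subseteq> D" using refinesD[OF r C(1)] by blast
  have "D = B" using partition_block_unique[OF pp D(1) B, of j] D(2) C(2) j by blast
  then have CB: "C \<in> res \<sigma> B" using C D by (simp add: res_def)
  have finB: "finite B" using part_blocks[OF pp fin B] by blast
  have "block_index \<sigma> j = Min C" by (rule block_index_eq[OF ps fin C])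
  moreover have "block_index (res \<sigma> B) j = Min C"
    by (rule block_index_eq[OF res_part[OF fin ps pp r B] finB CB C(2)])
  ultimately show ?thesis by simp
qed

lemma bi_img:
  assumes fin: "finite B" and b: "bij_betw e {1..m} B"
    and mono: "\<And>i j. i \<in> {1..m} \<Longrightarrow> j \<in> {1..m} \<Longrightarrow> i < j \<Longrightarrow> e i < e j"
    and p: "partition_on {1..m} \<rho>" and j: "j \<in> {1..m}"
  shows "block_index (img e \<rho>) (e j) = e (block_index \<rho> j)" and "block_index \<rho> j \<in> {1..m}"
proof -
  have "j \<in> \<Union>\<rho>" using p j by (simp add: partition_on_def)
  then obtain C where C: "C \<in> \<rho>" "j \<in> C" by blast
  have "finite C \<and> C \<noteq> {} \<and> C \<subseteq> {1..m}" by (rule part_blocks[OF p finite_atLeastAtMost C(1)])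
  then have Cs: "finite C" "C \<noteq> {}" "C \<subseteq> {1..m}" by auto
  have bi1: "block_index \<rho> j = Min C" by (rule block_index_eq[OF p finite_atLeastAtMost C])
  have "Min C \<in> C" by (rule Min_in[OF Cs(1,2)])
  then show "block_index \<rho> j \<in> {1..m}" using Cs(3) bi1 by auto
  have pi: "partition_on B (img e \<rho>)" by (rule img_part[OF b p])
  have eC: "e ` C \<in> img e \<rho>" "e j \<in> e ` C" using C by (auto simp: img_def)
  have "block_index (img e \<rho>) (e j) = Min (e ` C)" by (rule block_index_eq[OF pi fin eC])
  also have "Min (e ` C) = e (Min C)"
  proof (rule Min_eqI)
    show "finite (e ` C)" using Cs by simp
    show "e (Min C) \<in> e ` C" using Cs by simp
    fix y assume "y \<in> e ` C"
    then obtain x where x: "x \<in> C" "y = e x" by blast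
    have le: "Min C \<le> x" using Cs x by simp
    have mC: "Min C \<in> {1..m}" "x \<in> {1..m}" using Min_in[OF Cs(1,2)] x(1) Cs(3) by auto
    show "e (Min C) \<le> y"
    proof (cases "Min C = x")
      case True then show ?thesis using x by simp
    next
      case False
      then have "Min C < x" using le by simp
      then show ?thesis using mono[OF mC] x by simp
    qed
  qed
  finally show "block_index (img e \<rho>) (e j) = e (block_index \<rho> j)" using bi1 by simp
qed

context fes begin

lemma sl_1n: "sorted_list_of_set {1..n} = [1..<n+1]"
  by (metis atLeastLessThanSuc_atLeastAtMost sorted_list_of_set_range Suc_eq_plus1)

lemma phiF_Psi: "phiF \<iota> \<psi> n \<sigma> X = Psi (word (block_index \<sigma>) X (sorted_list_of_set {1..n}))"
  unfolding sl_1n by (simp add: phiF_def Psi_def P_def word_def comp_def del: upt_Suc)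

lemma part1:
  assumes "\<pi> \<in> NC n"
  shows "phiF \<iota> \<psi> n \<pi> X = (\<Prod>B\<in>\<pi>. \<phi> (ord_prod X B))"
proof -
  have pp: "partition_on {1..n} \<pi>" and nc: "noncrossing \<pi>" using assms by (auto simp: NC_def set_partitions_def)
  have "phiF \<iota> \<psi> n \<pi> X = (\<Prod>B\<in>\<pi>. Psi (word (block_index \<pi>) X (sorted_list_of_set B)))"
    unfolding phiF_Psi
    by (rule G2[OF _ pp nc]) (use block_index_kernel[OF pp] in auto)
  also have "\<dots> = (\<Prod>B\<in>\<pi>. \<phi> (ord_prod X B))"
  proof (rule prod.cong[OF refl])
    fix B assume B: "B \<in> \<pi>"
    show "Psi (word (block_index \<pi>) X (sorted_list_of_set B)) = \<phi> (ord_prod X B)"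
      by (rule Psi_const_block) (use block_index_eq[OF pp _ B] in auto)
  qed
  finally show ?thesis .
qed

lemma phiF_factor:
  assumes pp: "partition_on {1..n} \<pi>" and nc: "noncrossing \<pi>" and ps: "partition_on {1..n} \<sigma>" and r: "refines \<sigma> \<pi>"
  shows "phiF \<iota> \<psi> n \<sigma> X = (\<Prod>B\<in>\<pi>. Psi (word (block_index (res \<sigma> B)) X (sorted_list_of_set B)))"
proof -
  have "phiF \<iota> \<psi> n \<sigma> X = (\<Prod>B\<in>\<pi>. Psi (word (block_index \<sigma>) X (sorted_list_of_set B)))"
    unfolding phiF_Psi
  proof (rule G2[OF _ pp nc], simp, intro ballI impI)
    fix i j assume ij: "i \<in> {1..n}" "j \<in> {1..n}" "block_index \<sigma> i = block_index \<sigma> j"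
    obtain C where C: "C \<in> \<sigma>" "i \<in> C" "j \<in> C" using block_index_kernel[OF ps _ ij] by auto
    obtain D where "D \<in> \<pi>" "C \<subseteq> D" using refinesD[OF r C(1)] by blast
    then show "\<exists>B\<in>\<pi>. i \<in> B \<and> j \<in> B" using C by blast
  qed
  also have "\<dots> = (\<Prod>B\<in>\<pi>. Psi (word (block_index (res \<sigma> B)) X (sorted_list_of_set B)))"
  proof (rule prod.cong[OF refl])
    fix B assume B: "B \<in> \<pi>"
    have finB: "finite B" using part_blocks[OF pp _ B] by simp
    have "word (block_index \<sigma>) X (sorted_list_of_set B) = word (block_index (res \<sigma> B)) X (sorted_list_of_set B)"
      unfolding word_def using bi_res[OF _ ps pp r B] finB by (intro map_cong) auto
    then show "Psi (word (block_index \<sigma>) X (sorted_list_of_set B)) =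
      Psi (word (block_index (res \<sigma> B)) X (sorted_list_of_set B))" by simp
  qed
  finally show ?thesis .
qed

lemma block_sum:
  assumes fin: "finite B" and ne: "B \<noteq> {}"
  shows "(\<Sum>\<rho>\<in>parts B. Psi (word (block_index \<rho>) X (sorted_list_of_set B)) * of_int (mu B \<rho> {B}))
    = KFm \<iota> \<psi> (card B) (restrict_seq X B)"
proof -
  define m where "m = card B"
  define e where "e = enum B"
  define Y where "Y = restrict_seq X B"
  have m1: "1 \<le> m" using fin ne by (simp add: m_def Suc_leI card_gt_0_iff)
  have b: "bij_betw e {1..m} B" and mono: "\<And>i j. i \<in> {1..m} \<Longrightarrow> j \<in> {1..m} \<Longrightarrow> i < j \<Longrightarrow> e i < e j"
    and slB: "sorted_list_of_set B = map e [1..<m + 1]"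
    using enum_facts[OF fin] unfolding e_def m_def by auto
  have Y: "Y j = X (e j)" for j by (simp add: Y_def restrict_seq_def e_def enum_def)
  define F where "F \<rho> = Psi (word (block_index \<rho>) X (sorted_list_of_set B)) * of_int (mu B \<rho> {B})" for \<rho>
  have b': "bij_betw (inv_into {1..m} e) B {1..m}" using b by (rule bij_betw_inv_into)
  have "(\<Sum>\<rho>\<in>parts B. F \<rho>) = (\<Sum>\<rho>'\<in>parts {1..m}. F (img e \<rho>'))"
  proof (rule sum.reindex_bij_witness[where i = "img e" and j = "img (inv_into {1..m} e)"])
    fix a assume "a \<in> parts B"
    then have pa: "partition_on B a" by (simp add: parts_def)
    show "img e (img (inv_into {1..m} e) a) = a" by (rule img_img2[OF b pa])
    show "img (inv_into {1..m} e) a \<in> parts {1..m}" using img_part[OF b' pa] by (simp add: parts_def)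
    show "F (img e (img (inv_into {1..m} e) a)) = F a" using img_img2[OF b pa] by simp
  next
    fix c assume "c \<in> parts {1..m}"
    then have pc: "partition_on {1..m} c" by (simp add: parts_def)
    show "img (inv_into {1..m} e) (img e c) = c" by (rule img_img[OF b pc])
    show "img e c \<in> parts B" using img_part[OF b pc] by (simp add: parts_def)
  qed
  also have "\<dots> = (\<Sum>\<rho>'\<in>parts {1..m}. phiF \<iota> \<psi> m \<rho>' Y * of_int (mobius m \<rho>' {{1..m}}))"
  proof (rule sum.cong[OF refl])
    fix \<rho> assume "\<rho> \<in> parts {1..m}"
    then have p: "partition_on {1..m} \<rho>" by (simp add: parts_def)
    have one: "partition_on {1..m} {{1..m}}" using m1 by (intro partition_on_space) auto
    have imgone: "img e {{1..m}} = {B}" using b by (simp add: img_def bij_betw_def)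
    have mu_eq: "mu B (img e \<rho>) {B} = mobius m \<rho> {{1..m}}"
      using mu_img[OF b p one] imgone by (simp add: mobius_mu)
    let ?w = "word (block_index \<rho>) Y [1..<m + 1]"
    have w: "word (block_index (img e \<rho>)) X (sorted_list_of_set B) = rl e ?w"
      unfolding slB word_def rl_def using bi_img(1)[OF fin b mono p] Y by (simp del: upt_Suc)
    have inj: "inj_on e (idx ?w)"
    proof (rule inj_on_subset[OF bij_betw_imp_inj_on[OF b]])
      show "idx ?w \<subseteq> {1..m}" using bi_img(2)[OF fin b mono p] by (auto simp del: upt_Suc)
    qed
    have "Psi (word (block_index (img e \<rho>)) X (sorted_list_of_set B)) = phiF \<iota> \<psi> m \<rho> Y"
      unfolding w relabel[OF inj] phiF_Psi sl_1n ..
    then show "F (img e \<rho>) = phiF \<iota> \<psi> m \<rho> Y * of_int (mobius m \<rho> {{1..m}})"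
      unfolding F_def mu_eq by simp
  qed
  also have "\<dots> = KFm \<iota> \<psi> (card B) (restrict_seq X B)"
  proof -
    have "{\<sigma> \<in> set_partitions m. refines \<sigma> {{1..m}}} = parts {1..m}"
      by (auto simp: set_partitions_def parts_def Defs.refines_def partition_on_def)
    then show ?thesis by (simp add: KFm_def KF_def m_def Y_def)
  qed
  finally show ?thesis unfolding F_def .
qed

lemma part2:
  assumes "\<pi> \<in> NC n"
  shows "KF \<iota> \<psi> n \<pi> X = (\<Prod>B\<in>\<pi>. KFm \<iota> \<psi> (card B) (restrict_seq X B))"
proof -
  define A where "A = {1..n}"
  define sg where "sg = (\<lambda>x. {x}) ` A"
  have fin: "finite A" by (simp add: A_def)
  have pp: "partition_on A \<pi>" and nc: "noncrossing \<pi>" using assms by (auto simp: NC_def set_partitions_def A_def)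
  have psg: "partition_on A sg" unfolding sg_def by (rule partition_on_singletons)
  have rsg: "refines sg \<pi>" unfolding sg_def by (rule refines_sing[OF pp])
  have finpi: "finite \<pi>" using fin pp finite_elements by blast
  define F where "F B \<rho> = Psi (word (block_index \<rho>) X (sorted_list_of_set B)) * of_int (mu B \<rho> {B})" for B \<rho>
  have set_eq: "{\<sigma> \<in> set_partitions n. refines \<sigma> \<pi>} = TT A sg \<pi>"
    using refines_sing unfolding sg_def by (auto simp: set_partitions_def TT_def parts_def A_def)
  have "KF \<iota> \<psi> n \<pi> X = (\<Sum>\<sigma>\<in>TT A sg \<pi>. phiF \<iota> \<psi> n \<sigma> X * of_int (mobius n \<sigma> \<pi>))"
    unfolding KF_def set_eq ..
  also have "\<dots> = (\<Sum>\<sigma>\<in>TT A sg \<pi>. \<Prod>B\<in>\<pi>. F B (res \<sigma> B))"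
  proof (rule sum.cong[OF refl])
    fix \<sigma> assume "\<sigma> \<in> TT A sg \<pi>"
    then have ps: "partition_on A \<sigma>" and r: "refines \<sigma> \<pi>" by (auto simp: TT_def parts_def)
    have "phiF \<iota> \<psi> n \<sigma> X = (\<Prod>B\<in>\<pi>. Psi (word (block_index (res \<sigma> B)) X (sorted_list_of_set B)))"
      using phiF_factor[OF pp[unfolded A_def] nc ps[unfolded A_def] r, of X] by simp
    moreover have "mobius n \<sigma> \<pi> = (\<Prod>B\<in>\<pi>. mu B (res \<sigma> B) {B})"
      using mu_prod[OF fin ps pp r] by (simp add: mobius_mu A_def)
    ultimately show "phiF \<iota> \<psi> n \<sigma> X * of_int (mobius n \<sigma> \<pi>) = (\<Prod>B\<in>\<pi>. F B (res \<sigma> B))"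
      by (simp add: F_def prod.distrib)
  qed
  also have "\<dots> = (\<Sum>g\<in>Pi\<^sub>E \<pi> (TB sg). \<Prod>B\<in>\<pi>. F B (res (\<Union>B\<in>\<pi>. g B) B))"
    by (rule sum_TT[OF fin psg pp rsg])
  also have "\<dots> = (\<Sum>g\<in>Pi\<^sub>E \<pi> (TB sg). \<Prod>B\<in>\<pi>. F B (g B))"
  proof (rule sum.cong[OF refl])
    fix g assume g: "g \<in> Pi\<^sub>E \<pi> (TB sg)"
    show "(\<Prod>B\<in>\<pi>. F B (res (\<Union>B\<in>\<pi>. g B) B)) = (\<Prod>B\<in>\<pi>. F B (g B))"
      using glue(2)[OF fin psg pp rsg g] by (intro prod.cong) auto
  qed
  also have "\<dots> = (\<Prod>B\<in>\<pi>. \<Sum>\<rho>\<in>TB sg B. F B \<rho>)"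
  proof (rule prod_sum_PiE[symmetric, OF finpi])
    fix B assume "B \<in> \<pi>"
    then show "finite (TB sg B)" using finite_parts part_blocks[OF pp fin] by (auto simp: TB_def)
  qed
  also have "\<dots> = (\<Prod>B\<in>\<pi>. KFm \<iota> \<psi> (card B) (restrict_seq X B))"
  proof (rule prod.cong[OF refl])
    fix B assume B: "B \<in> \<pi>"
    have Bs: "finite B \<and> B \<noteq> {} \<and> B \<subseteq> A" by (rule part_blocks[OF pp fin B])
    have "TB sg B = parts B" unfolding sg_def by (rule TB_sing) (use Bs in auto)
    then show "(\<Sum>\<rho>\<in>TB sg B. F B \<rho>) = KFm \<iota> \<psi> (card B) (restrict_seq X B)"
      using block_sum[of B X] Bs by (simp add: F_def)
  qed
  finally show ?thesis .
qed

end

theorem proposition4p3: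
  fixes smA :: "complex \<Rightarrow> 'a::ring_1 \<Rightarrow> 'a"
    and \<phi> :: "'a \<Rightarrow> complex"
    and smU :: "complex \<Rightarrow> 'u::ring_1 \<Rightarrow> 'u"
    and \<iota> :: "nat \<Rightarrow> 'a \<Rightarrow> 'u"
    and \<psi> :: "'u \<Rightarrow> complex"
    and n :: nat and \<pi> :: "nat set set" and X :: "nat \<Rightarrow> 'a"
  assumes "nc_prob_space smA \<phi>"
    and "free_exch_system smA \<phi> smU \<iota> \<psi>"
    and "\<pi> \<in> NC n"
  shows "phiF \<iota> \<psi> n \<pi> X = (\<Prod>B\<in>\<pi>. \<phi> (ord_prod X B))
     \<and> KF \<iota> \<psi> n \<pi> X = (\<Prod>B\<in>\<pi>. KFm \<iota> \<psi> (card B) (restrict_seq X B))"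
proof -
  interpret fes smA \<phi> smU \<iota> \<psi> using assms(1,2) by unfold_locales
  show ?thesis using part1[OF assms(3)] part2[OF assms(3)] by simp
qed

end
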